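(* Let $R$ be a commutative Noetherian local ring and $M$ any finitely generated $R$-module, with syzygy $\Omega M$. Then $M\oplus\Omega M\in\mathcal E(R)$, i.e. $\underline{\mathrm{ann}}_R(M\oplus\Omega M)=\mathrm{ARann}_R(M\oplus\Omega M)$.
   Context: All modules are finitely generated. $\Omega M$ is the kernel of a surjection from a free module onto $M$ (defined up to free summands). $\underline{\mathrm{ann}}_R(M)=\mathrm{ann}_R\underline{\mathrm{End}}_R(M)$, where $\underline{\mathrm{End}}_R(M)$ is $\mathrm{End}_R(M)$ modulo endomorphisms factoring through a free module. $\mathrm{ARann}_R(M)=\bigcap_{i>0}\mathrm{ann}_R\mathrm{Ext}^i_R(M,M\oplus R)$. $\mathcal{E}(R)$ is the full subcategory of modules $M$ with $\underline{\mathrm{ann}}_R(M)=\mathrm{ARann}_R(M)$. *)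

theory Defs
  imports "HOL-Algebra.Module" "HOL-Algebra.Ideal"
begin

definition noetherian_ring :: "'a ring \<Rightarrow> bool" where
  "noetherian_ring R \<longleftrightarrow> cring R \<and>
     (\<forall>I. ideal I R \<longrightarrow> (\<exists>S. finite S \<and> S \<subseteq> carrier R \<and> I = Idl\<^bsub>R\<^esub> S))"

definition local_ring :: "'a ring \<Rightarrow> bool" where
  "local_ring R \<longleftrightarrow> cring R \<and> (\<exists>!I. maximalideal I R)"

definition mod_hom :: "'a ring \<Rightarrow> ('a, 'b) module \<Rightarrow> ('a, 'c) module \<Rightarrow> ('b \<Rightarrow> 'c) set" where
  "mod_hom R M N = {f. f \<in> carrier M \<rightarrow> carrier N \<and>
     (\<forall>x\<in>carrier M. \<forall>y\<in>carrier M. f (x \<oplus>\<^bsub>M\<^esub> y) = f x \<oplus>\<^bsub>N\<^esub> f y) \<and>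
     (\<forall>a\<in>carrier R. \<forall>x\<in>carrier M. f (a \<odot>\<^bsub>M\<^esub> x) = a \<odot>\<^bsub>N\<^esub> f x)}"

text \<open>The free module R^n (vectors indexed by {0..<n}, padded with zeros).\<close>
definition free_mod :: "'a ring \<Rightarrow> nat \<Rightarrow> ('a, nat \<Rightarrow> 'a) module" where
  "free_mod R n = \<lparr> carrier = {v. (\<forall>i<n. v i \<in> carrier R) \<and> (\<forall>i. n \<le> i \<longrightarrow> v i = \<zero>\<^bsub>R\<^esub>)},
     mult = (\<lambda>v w. undefined), one = undefined,
     zero = (\<lambda>i. \<zero>\<^bsub>R\<^esub>), add = (\<lambda>v w i. v i \<oplus>\<^bsub>R\<^esub> w i),
     smult = (\<lambda>a v i. a \<otimes>\<^bsub>R\<^esub> v i) \<rparr>"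

definition self_mod :: "'a ring \<Rightarrow> ('a, 'a) module" where
  "self_mod R = \<lparr> carrier = carrier R, mult = monoid.mult R, one = one R,
     zero = zero R, add = add R, smult = monoid.mult R \<rparr>"

definition dsum :: "('a, 'b) module \<Rightarrow> ('a, 'c) module \<Rightarrow> ('a, 'b \<times> 'c) module" where
  "dsum M N = \<lparr> carrier = carrier M \<times> carrier N,
     mult = (\<lambda>x y. undefined), one = undefined,
     zero = (\<zero>\<^bsub>M\<^esub>, \<zero>\<^bsub>N\<^esub>),
     add = (\<lambda>x y. (fst x \<oplus>\<^bsub>M\<^esub> fst y, snd x \<oplus>\<^bsub>N\<^esub> snd y)),
     smult = (\<lambda>a x. (a \<odot>\<^bsub>M\<^esub> fst x, a \<odot>\<^bsub>N\<^esub> snd x)) \<rparr>"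

definition mod_kernel :: "('a, 'b) module \<Rightarrow> ('a, 'c) module \<Rightarrow> ('b \<Rightarrow> 'c) \<Rightarrow> 'b set" where
  "mod_kernel M N f = {x \<in> carrier M. f x = \<zero>\<^bsub>N\<^esub>}"

definition submod :: "('a, 'b) module \<Rightarrow> 'b set \<Rightarrow> ('a, 'b) module" where
  "submod M K = M\<lparr>carrier := K\<rparr>"

text \<open>ann of the stable endomorphism module: r such that r*phi factors through
  a (finitely generated) free module, for every endomorphism phi.\<close>
definition stable_ann :: "'a ring \<Rightarrow> ('a, 'b) module \<Rightarrow> 'a set" where
  "stable_ann R X = {r \<in> carrier R. \<forall>\<phi> \<in> mod_hom R X X.
     \<exists>n g h. g \<in> mod_hom R X (free_mod R n) \<and> h \<in> mod_hom R (free_mod R n) X \<and>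
       (\<forall>x\<in>carrier X. h (g x) = r \<odot>\<^bsub>X\<^esub> \<phi> x)}"

text \<open>A free resolution  ... -> F_2 -d_2-> F_1 -d_1-> F_0 -eps-> X -> 0
  with F_i = R^(n i).\<close>
definition free_resolution ::
  "'a ring \<Rightarrow> ('a, 'b) module \<Rightarrow> (nat \<Rightarrow> nat) \<Rightarrow> ((nat \<Rightarrow> 'a) \<Rightarrow> 'b)
     \<Rightarrow> (nat \<Rightarrow> (nat \<Rightarrow> 'a) \<Rightarrow> (nat \<Rightarrow> 'a)) \<Rightarrow> bool" where
  "free_resolution R X n \<epsilon> d \<longleftrightarrow>
     \<epsilon> \<in> mod_hom R (free_mod R (n 0)) X \<and>
     \<epsilon> ` carrier (free_mod R (n 0)) = carrier X \<and>
     (\<forall>i. d (Suc i) \<in> mod_hom R (free_mod R (n (Suc i))) (free_mod R (n i))) \<and>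
     mod_kernel (free_mod R (n 0)) X \<epsilon> = d 1 ` carrier (free_mod R (n 1)) \<and>
     (\<forall>i. mod_kernel (free_mod R (n (Suc i))) (free_mod R (n i)) (d (Suc i))
            = d (Suc (Suc i)) ` carrier (free_mod R (n (Suc (Suc i)))))"

text \<open>ann_R Ext^i_R(X,N), computed as cohomology of Hom(F_*, N): r annihilates
  Ext^i iff r times every i-cocycle is an i-coboundary (for any free resolution).\<close>
definition ext_ann :: "'a ring \<Rightarrow> ('a, 'b) module \<Rightarrow> ('a, 'c) module \<Rightarrow> nat \<Rightarrow> 'a set" where
  "ext_ann R X N i = {r \<in> carrier R. \<forall>n \<epsilon> d. free_resolution R X n \<epsilon> d \<longrightarrow>
     (\<forall>f \<in> mod_hom R (free_mod R (n i)) N.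
        (\<forall>y\<in>carrier (free_mod R (n (Suc i))). f (d (Suc i) y) = \<zero>\<^bsub>N\<^esub>) \<longrightarrow>
        (if i = 0 then (\<forall>x\<in>carrier (free_mod R (n i)). r \<odot>\<^bsub>N\<^esub> f x = \<zero>\<^bsub>N\<^esub>)
         else (\<exists>g \<in> mod_hom R (free_mod R (n (i - 1))) N.
                 \<forall>x\<in>carrier (free_mod R (n i)). r \<odot>\<^bsub>N\<^esub> f x = g (d i x))))}"

definition AR_ann :: "'a ring \<Rightarrow> ('a, 'b) module \<Rightarrow> 'a set" where
  "AR_ann R X = carrier R \<inter> (\<Inter>i\<in>{i. 0 < i}. ext_ann R X (dsum X (self_mod R)) i)"

end

theory Submission
  imports Defs
begin


fun rsum :: "('a,'b) ring_scheme \<Rightarrow> (nat \<Rightarrow> 'a) \<Rightarrow> nat \<Rightarrow> 'a" where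
  "rsum R f 0 = \<zero>\<^bsub>R\<^esub>"
| "rsum R f (Suc p) = rsum R f p \<oplus>\<^bsub>R\<^esub> f p"

definition vsub :: "('a,'b) ring_scheme \<Rightarrow> (nat \<Rightarrow> 'a) \<Rightarrow> (nat \<Rightarrow> 'a) \<Rightarrow> (nat \<Rightarrow> 'a)" where
  "vsub R u v = (\<lambda>i. u i \<ominus>\<^bsub>R\<^esub> v i)"

definition lo :: "('a,'b) ring_scheme \<Rightarrow> nat \<Rightarrow> (nat \<Rightarrow> 'a) \<Rightarrow> (nat \<Rightarrow> 'a)" where
  "lo R k w = (\<lambda>i. if i < k then w i else \<zero>\<^bsub>R\<^esub>)"

definition hi :: "nat \<Rightarrow> (nat \<Rightarrow> 'a) \<Rightarrow> (nat \<Rightarrow> 'a)" where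
  "hi k w = (\<lambda>i. w (i + k))"

definition join :: "nat \<Rightarrow> (nat \<Rightarrow> 'a) \<Rightarrow> (nat \<Rightarrow> 'a) \<Rightarrow> (nat \<Rightarrow> 'a)" where
  "join k a b = (\<lambda>i. if i < k then a i else b (i - k))"

lemma mod_homD:
  assumes "f \<in> mod_hom R A B"
  shows "\<And>x. x \<in> carrier A \<Longrightarrow> f x \<in> carrier B"
    and "\<And>x y. x \<in> carrier A \<Longrightarrow> y \<in> carrier A \<Longrightarrow> f (x \<oplus>\<^bsub>A\<^esub> y) = f x \<oplus>\<^bsub>B\<^esub> f y"
    and "\<And>a x. a \<in> carrier R \<Longrightarrow> x \<in> carrier A \<Longrightarrow> f (a \<odot>\<^bsub>A\<^esub> x) = a \<odot>\<^bsub>B\<^esub> f x"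
  using assms unfolding mod_hom_def by auto

lemma mod_homI:
  assumes "\<And>x. x \<in> carrier A \<Longrightarrow> f x \<in> carrier B"
    and "\<And>x y. x \<in> carrier A \<Longrightarrow> y \<in> carrier A \<Longrightarrow> f (x \<oplus>\<^bsub>A\<^esub> y) = f x \<oplus>\<^bsub>B\<^esub> f y"
    and "\<And>a x. a \<in> carrier R \<Longrightarrow> x \<in> carrier A \<Longrightarrow> f (a \<odot>\<^bsub>A\<^esub> x) = a \<odot>\<^bsub>B\<^esub> f x"
  shows "f \<in> mod_hom R A B"
  using assms unfolding mod_hom_def by auto

lemma mod_hom_comp:
  assumes "f \<in> mod_hom R A B" "g \<in> mod_hom R B C"
  shows "(\<lambda>x. g (f x)) \<in> mod_hom R A C"
  using assms unfolding mod_hom_def by (auto simp: Pi_def)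

lemma mod_hom_zero:
  assumes "module R A" "module R B" "f \<in> mod_hom R A B"
  shows "f \<zero>\<^bsub>A\<^esub> = \<zero>\<^bsub>B\<^esub>"
proof -
  interpret A: module R A by fact
  interpret B: module R B by fact
  have "f \<zero>\<^bsub>A\<^esub> = f (\<zero>\<^bsub>R\<^esub> \<odot>\<^bsub>A\<^esub> \<zero>\<^bsub>A\<^esub>)" by simp
  also have "\<dots> = \<zero>\<^bsub>R\<^esub> \<odot>\<^bsub>B\<^esub> f \<zero>\<^bsub>A\<^esub>" by (rule mod_homD(3)[OF assms(3)]) auto
  also have "\<dots> = \<zero>\<^bsub>B\<^esub>" using mod_homD(1)[OF assms(3)] by simp
  finally show ?thesis .
qed

locale cr = cring R for R :: "'a ring" (structure)

context cr
begin

lemma rsum_closed: "(\<And>j. j < p \<Longrightarrow> f j \<in> carrier R) \<Longrightarrow> rsum R f p \<in> carrier R"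
  by (induction p) auto

lemma rsum_cong: "(\<And>j. j < p \<Longrightarrow> f j = g j) \<Longrightarrow> rsum R f p = rsum R g p"
  by (induction p) auto

lemma rsum_zero: "rsum R (\<lambda>j. \<zero>) p = \<zero>"
  by (induction p) auto

lemma rsum_add: "(\<And>j. j < p \<Longrightarrow> f j \<in> carrier R) \<Longrightarrow> (\<And>j. j < p \<Longrightarrow> g j \<in> carrier R) \<Longrightarrow>
   rsum R (\<lambda>j. f j \<oplus> g j) p = rsum R f p \<oplus> rsum R g p"
proof (induction p)
  case 0 then show ?case by simp
next
  case (Suc p)
  have c: "rsum R f p \<in> carrier R" "rsum R g p \<in> carrier R" "f p \<in> carrier R" "g p \<in> carrier R"
    using Suc.prems by (auto intro: rsum_closed)
  have "rsum R (\<lambda>j. f j \<oplus> g j) (Suc p) = (rsum R f p \<oplus> rsum R g p) \<oplus> (f p \<oplus> g p)"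
    using Suc by simp
  also have "\<dots> = rsum R f (Suc p) \<oplus> rsum R g (Suc p)" using c by simp algebra
  finally show ?case .
qed

lemma rsum_lmult: "a \<in> carrier R \<Longrightarrow> (\<And>j. j < p \<Longrightarrow> f j \<in> carrier R) \<Longrightarrow>
   a \<otimes> rsum R f p = rsum R (\<lambda>j. a \<otimes> f j) p"
proof (induction p)
  case 0 then show ?case by simp
next
  case (Suc p)
  have c: "rsum R f p \<in> carrier R" "f p \<in> carrier R"
    using Suc.prems by (auto intro: rsum_closed)
  show ?case using Suc c by (simp add: r_distr)
qed

lemma FM_carrier: "v \<in> carrier (free_mod R k) \<longleftrightarrow> (\<forall>i<k. v i \<in> carrier R) \<and> (\<forall>i. k \<le> i \<longrightarrow> v i = \<zero>)"
  by (simp add: free_mod_def)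

lemma FM_simps [simp]:
  "\<zero>\<^bsub>free_mod R k\<^esub> = (\<lambda>i. \<zero>)"
  "v \<oplus>\<^bsub>free_mod R k\<^esub> w = (\<lambda>i. v i \<oplus> w i)"
  "a \<odot>\<^bsub>free_mod R k\<^esub> v = (\<lambda>i. a \<otimes> v i)"
  by (simp_all add: free_mod_def)

lemma FM_elem: "v \<in> carrier (free_mod R k) \<Longrightarrow> v i \<in> carrier R"
  unfolding FM_carrier by (cases "i < k") auto

lemma FM_zero_closed [simp]: "(\<lambda>i. \<zero>) \<in> carrier (free_mod R k)"
  by (simp add: FM_carrier)

lemma FM_eqI: "(\<And>i. v i = w i) \<Longrightarrow> v = w" by auto

lemma FM_smult_closed [simp]: "a \<in> carrier R \<Longrightarrow> v \<in> carrier (free_mod R k) \<Longrightarrow> (\<lambda>i. a \<otimes> v i) \<in> carrier (free_mod R k)"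
  by (auto simp: FM_carrier)
lemma FM_add_closed [simp]: "v \<in> carrier (free_mod R k) \<Longrightarrow> w \<in> carrier (free_mod R k) \<Longrightarrow> (\<lambda>i. v i \<oplus> w i) \<in> carrier (free_mod R k)"
  by (auto simp: FM_carrier)

lemma module_FM: "module R (free_mod R k)"
proof (rule moduleI)
  show "cring R" by (rule is_cring)
  show "abelian_group (free_mod R k)"
  proof (rule abelian_groupI)
    fix x y assume "x \<in> carrier (free_mod R k)" "y \<in> carrier (free_mod R k)"
    then show "x \<oplus>\<^bsub>free_mod R k\<^esub> y \<in> carrier (free_mod R k)"
      by (auto simp: FM_carrier)
  next
    show "\<zero>\<^bsub>free_mod R k\<^esub> \<in> carrier (free_mod R k)" by simp
  next
    fix x y z assume "x \<in> carrier (free_mod R k)" "y \<in> carrier (free_mod R k)" "z \<in> carrier (free_mod R k)"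
    then show "x \<oplus>\<^bsub>free_mod R k\<^esub> y \<oplus>\<^bsub>free_mod R k\<^esub> z = x \<oplus>\<^bsub>free_mod R k\<^esub> (y \<oplus>\<^bsub>free_mod R k\<^esub> z)"
      by (auto simp: FM_elem a_assoc)
  next
    fix x y assume "x \<in> carrier (free_mod R k)" "y \<in> carrier (free_mod R k)"
    then show "x \<oplus>\<^bsub>free_mod R k\<^esub> y = y \<oplus>\<^bsub>free_mod R k\<^esub> x"
      by (auto simp: FM_elem a_comm)
  next
    fix x assume "x \<in> carrier (free_mod R k)"
    then show "\<zero>\<^bsub>free_mod R k\<^esub> \<oplus>\<^bsub>free_mod R k\<^esub> x = x"
      by (auto simp: FM_elem)
  next
    fix x assume x: "x \<in> carrier (free_mod R k)"
    show "\<exists>y\<in>carrier (free_mod R k). y \<oplus>\<^bsub>free_mod R k\<^esub> x = \<zero>\<^bsub>free_mod R k\<^esub>"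
      by (rule bexI[of _ "\<lambda>i. \<ominus> x i"]) (use x in \<open>auto simp: FM_elem FM_carrier l_neg\<close>)
  qed
qed (auto simp: FM_carrier FM_elem l_distr r_distr m_assoc)

lemma vsub_closed: "u \<in> carrier (free_mod R k) \<Longrightarrow> v \<in> carrier (free_mod R k) \<Longrightarrow> vsub R u v \<in> carrier (free_mod R k)"
  by (auto simp: FM_carrier vsub_def minus_eq)

lemma vsub_eq: "u \<in> carrier (free_mod R k) \<Longrightarrow> v \<in> carrier (free_mod R k) \<Longrightarrow>
   vsub R u v = u \<oplus>\<^bsub>free_mod R k\<^esub> ((\<ominus> \<one>) \<odot>\<^bsub>free_mod R k\<^esub> v)"
  by (auto simp: vsub_def FM_elem minus_eq l_minus)

lemma hom_vsub:
  assumes A: "module R A" and f: "f \<in> mod_hom R (free_mod R k) A"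
    and u: "u \<in> carrier (free_mod R k)" and v: "v \<in> carrier (free_mod R k)"
  shows "f (vsub R u v) = f u \<ominus>\<^bsub>A\<^esub> f v"
proof -
  interpret A: module R A by fact
  interpret F: module R "free_mod R k" by (rule module_FM)
  have mv: "(\<ominus> \<one>) \<odot>\<^bsub>free_mod R k\<^esub> v \<in> carrier (free_mod R k)" using v by simp
  have "f (vsub R u v) = f (u \<oplus>\<^bsub>free_mod R k\<^esub> ((\<ominus> \<one>) \<odot>\<^bsub>free_mod R k\<^esub> v))"
    using u v by (simp only: vsub_eq)
  also have "\<dots> = f u \<oplus>\<^bsub>A\<^esub> f ((\<ominus> \<one>) \<odot>\<^bsub>free_mod R k\<^esub> v)"
    by (rule mod_homD(2)[OF f u mv])
  also have "\<dots> = f u \<oplus>\<^bsub>A\<^esub> ((\<ominus> \<one>) \<odot>\<^bsub>A\<^esub> f v)"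
    using mod_homD(3)[OF f _ v, of "\<ominus> \<one>"] by simp
  also have "\<dots> = f u \<oplus>\<^bsub>A\<^esub> (\<ominus>\<^bsub>A\<^esub> f v)"
    using mod_homD(1)[OF f v] by (simp add: A.smult_l_minus)
  finally show ?thesis by (simp add: A.minus_eq)
qed

lemma lo_closed: "w \<in> carrier (free_mod R (k + l)) \<Longrightarrow> lo R k w \<in> carrier (free_mod R k)"
  unfolding FM_carrier lo_def by simp
lemma hi_closed: "w \<in> carrier (free_mod R (k + l)) \<Longrightarrow> hi k w \<in> carrier (free_mod R l)"
  unfolding FM_carrier hi_def by simp
lemma join_closed: "a \<in> carrier (free_mod R k) \<Longrightarrow> b \<in> carrier (free_mod R l) \<Longrightarrow> join k a b \<in> carrier (free_mod R (k + l))"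
  by (auto simp: FM_carrier join_def)
lemma lo_join: "a \<in> carrier (free_mod R k) \<Longrightarrow> lo R k (join k a b) = a"
  by (auto simp: FM_carrier join_def lo_def)
lemma hi_join: "hi k (join k a b) = b"
  by (auto simp: join_def hi_def)
lemma lo_hom: "lo R k \<in> mod_hom R (free_mod R (k + l)) (free_mod R k)"
  apply (rule mod_homI) apply (erule lo_closed) by (auto simp: lo_def)
lemma hi_hom: "hi k \<in> mod_hom R (free_mod R (k + l)) (free_mod R l)"
  apply (rule mod_homI) apply (erule hi_closed) by (auto simp: hi_def)
lemma FM_mono: "v \<in> carrier (free_mod R k) \<Longrightarrow> k \<le> k' \<Longrightarrow> v \<in> carrier (free_mod R k')"
  by (auto simp: FM_carrier) (metis not_less zero_closed)

end


context cr begin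

lemma hom_FM_add: "f \<in> mod_hom R (free_mod R k) B \<Longrightarrow> x \<in> carrier (free_mod R k) \<Longrightarrow> y \<in> carrier (free_mod R k)
   \<Longrightarrow> f (\<lambda>i. x i \<oplus> y i) = f x \<oplus>\<^bsub>B\<^esub> f y"
  using mod_homD(2)[of f R "free_mod R k" B x y] by simp

lemma hom_FM_smult: "f \<in> mod_hom R (free_mod R k) B \<Longrightarrow> a \<in> carrier R \<Longrightarrow> x \<in> carrier (free_mod R k)
   \<Longrightarrow> f (\<lambda>i. a \<otimes> x i) = a \<odot>\<^bsub>B\<^esub> f x"
  using mod_homD(3)[of f R "free_mod R k" B a x] by simp

lemma hom_FM_zero: "module R B \<Longrightarrow> f \<in> mod_hom R (free_mod R k) B \<Longrightarrow> f (\<lambda>i. \<zero>) = \<zero>\<^bsub>B\<^esub>"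
  using mod_hom_zero[OF module_FM, of B f k] by simp

lemma lift:
  assumes A: "module R A" and f: "f \<in> mod_hom R (free_mod R k) A" and p: "p \<in> mod_hom R (free_mod R k') A"
    and img: "\<And>v. v \<in> carrier (free_mod R k) \<Longrightarrow> f v \<in> p ` carrier (free_mod R k')"
  shows "\<exists>h \<in> mod_hom R (free_mod R k) (free_mod R k'). \<forall>v\<in>carrier (free_mod R k). p (h v) = f v"
proof -
  interpret A: module R A by fact
  define e where "e j = (\<lambda>i. if i = j then \<one> else \<zero>)" for j :: nat
  have e: "j < k \<Longrightarrow> e j \<in> carrier (free_mod R k)" for j by (auto simp: e_def FM_carrier)
  have "\<forall>j. \<exists>b. j < k \<longrightarrow> b \<in> carrier (free_mod R k') \<and> p b = f (e j)"
  proof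
    fix j show "\<exists>b. j < k \<longrightarrow> b \<in> carrier (free_mod R k') \<and> p b = f (e j)"
    proof (cases "j < k")
      case True
      then obtain b where "b \<in> carrier (free_mod R k')" "f (e j) = p b" using img[OF e[OF True]] by (auto simp only: image_iff)
      then show ?thesis by metis
    qed auto
  qed
  then obtain b where b: "\<And>j. j < k \<Longrightarrow> b j \<in> carrier (free_mod R k') \<and> p (b j) = f (e j)"
    by metis
  have bc: "j < k \<Longrightarrow> b j i \<in> carrier R" for j i using b FM_elem by blast
  define h where "h v = (\<lambda>i. rsum R (\<lambda>j. v j \<otimes> b j i) k)" for v
  have hom: "h \<in> mod_hom R (free_mod R k) (free_mod R k')"
  proof (rule mod_homI)
    fix x assume x: "x \<in> carrier (free_mod R k)"
    show "h x \<in> carrier (free_mod R k')"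
      unfolding FM_carrier h_def
    proof (intro conjI allI impI)
      fix i assume "i < k'" then show "rsum R (\<lambda>j. x j \<otimes> b j i) k \<in> carrier R"
        using x bc by (auto intro!: rsum_closed simp: FM_elem)
    next
      fix i assume "k' \<le> i"
      have "x j \<otimes> b j i = \<zero>" if jk: "j < k" for j
      proof -
        have "b j \<in> carrier (free_mod R k')" using b jk  by auto
        then have "b j i = \<zero>" using \<open>k' \<le> i\<close> unfolding FM_carrier by blast
        then show ?thesis using x FM_elem by simp
      qed
      then show "rsum R (\<lambda>j. x j \<otimes> b j i) k = \<zero>" using rsum_cong[of k _ "\<lambda>j. \<zero>"] rsum_zero by simp
    qed
  next
    fix x y assume x: "x \<in> carrier (free_mod R k)" and y: "y \<in> carrier (free_mod R k)"
    show "h (x \<oplus>\<^bsub>free_mod R k\<^esub> y) = h x \<oplus>\<^bsub>free_mod R k'\<^esub> h y"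
    proof (rule ext)
      fix i
      have "rsum R (\<lambda>j. (x j \<oplus> y j) \<otimes> b j i) k = rsum R (\<lambda>j. x j \<otimes> b j i \<oplus> y j \<otimes> b j i) k"
        by (rule rsum_cong) (use x y bc in \<open>auto simp: FM_elem l_distr\<close>)
      also have "\<dots> = rsum R (\<lambda>j. x j \<otimes> b j i) k \<oplus> rsum R (\<lambda>j. y j \<otimes> b j i) k"
        by (rule rsum_add) (use x y bc in \<open>auto simp: FM_elem\<close>)
      finally show "h (x \<oplus>\<^bsub>free_mod R k\<^esub> y) i = (h x \<oplus>\<^bsub>free_mod R k'\<^esub> h y) i" by (simp add: h_def)
    qed
  next
    fix a x assume a: "a \<in> carrier R" and x: "x \<in> carrier (free_mod R k)"
    show "h (a \<odot>\<^bsub>free_mod R k\<^esub> x) = a \<odot>\<^bsub>free_mod R k'\<^esub> h x"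
    proof (rule ext)
      fix i
      have "rsum R (\<lambda>j. (a \<otimes> x j) \<otimes> b j i) k = rsum R (\<lambda>j. a \<otimes> (x j \<otimes> b j i)) k"
        by (rule rsum_cong) (use a x bc in \<open>auto simp: FM_elem m_assoc\<close>)
      also have "\<dots> = a \<otimes> rsum R (\<lambda>j. x j \<otimes> b j i) k"
        by (rule rsum_lmult[symmetric]) (use a x bc in \<open>auto simp: FM_elem\<close>)
      finally show "h (a \<odot>\<^bsub>free_mod R k\<^esub> x) i = (a \<odot>\<^bsub>free_mod R k'\<^esub> h x) i" by (simp add: h_def)
    qed
  qed
  have key: "t \<le> k \<Longrightarrow> p (\<lambda>i. rsum R (\<lambda>j. v j \<otimes> b j i) t) = f (\<lambda>i. if i < t then v i else \<zero>)"
    if v: "v \<in> carrier (free_mod R k)" for v t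
  proof (induction t)
    case 0
    have "p (\<lambda>i. \<zero>) = \<zero>\<^bsub>A\<^esub>" "f (\<lambda>i. \<zero>) = \<zero>\<^bsub>A\<^esub>" using hom_FM_zero[OF A p] hom_FM_zero[OF A f] by auto
    then show ?case by simp
  next
    case (Suc t)
    then have t: "t < k" by simp
    define u where "u = (\<lambda>i. rsum R (\<lambda>j. v j \<otimes> b j i) t)"
    define w where "w = (\<lambda>i. if i < t then v i else \<zero>)"
    have uc: "u \<in> carrier (free_mod R k')"
      unfolding FM_carrier u_def
    proof (intro conjI allI impI)
      fix i assume "i < k'" then show "rsum R (\<lambda>j. v j \<otimes> b j i) t \<in> carrier R"
        using v bc t by (auto intro!: rsum_closed simp: FM_elem)
    next
      fix i assume "k' \<le> i"
      have "v j \<otimes> b j i = \<zero>" if jk: "j < t" for j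
      proof -
        have "b j \<in> carrier (free_mod R k')" using b jk t by auto
        then have "b j i = \<zero>" using \<open>k' \<le> i\<close> unfolding FM_carrier by blast
        then show ?thesis using v FM_elem by simp
      qed
      then show "rsum R (\<lambda>j. v j \<otimes> b j i) t = \<zero>" using rsum_cong[of t _ "\<lambda>j. \<zero>"] rsum_zero by simp
    qed
    have wc: "w \<in> carrier (free_mod R k)" using v t by (auto simp: w_def FM_carrier)
    have vt: "v t \<in> carrier R" using v FM_elem by blast
    have "p (\<lambda>i. rsum R (\<lambda>j. v j \<otimes> b j i) (Suc t)) = p (\<lambda>i. u i \<oplus> v t \<otimes> b t i)"
      by (simp add: u_def)
    also have "\<dots> = p u \<oplus>\<^bsub>A\<^esub> v t \<odot>\<^bsub>A\<^esub> p (b t)"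
      using hom_FM_add[OF p uc FM_smult_closed[OF vt conjunct1[OF b[OF t]]]] hom_FM_smult[OF p vt conjunct1[OF b[OF t]]]
      by simp
    also have "\<dots> = f w \<oplus>\<^bsub>A\<^esub> v t \<odot>\<^bsub>A\<^esub> f (e t)" using Suc t b u_def w_def by simp
    also have "\<dots> = f (\<lambda>i. w i \<oplus> v t \<otimes> e t i)"
      using hom_FM_add[OF f wc FM_smult_closed[OF vt e[OF t]]] hom_FM_smult[OF f vt e[OF t]] by simp
    also have "(\<lambda>i. w i \<oplus> v t \<otimes> e t i) = (\<lambda>i. if i < Suc t then v i else \<zero>)"
    proof (rule ext)
      fix i
      have vi: "v i \<in> carrier R" using v FM_elem by blast
      show "w i \<oplus> v t \<otimes> e t i = (if i < Suc t then v i else \<zero>)"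
        using vi vt by (cases "i < t"; cases "i = t") (auto simp: w_def e_def)
    qed
    finally show ?case .
  qed
  show ?thesis
  proof (intro bexI ballI)
    fix v assume v: "v \<in> carrier (free_mod R k)"
    have "(\<lambda>i. if i < k then v i else \<zero>) = v" using v by (auto simp: FM_carrier)
    then show "p (h v) = f v" using key[OF v, of k] by (simp add: h_def)
  qed (rule hom)
qed

end


context cr begin

lemma vsub_hom:
  assumes "f1 \<in> mod_hom R (free_mod R k) (free_mod R k')" "f2 \<in> mod_hom R (free_mod R k) (free_mod R k')"
  shows "(\<lambda>x. vsub R (f1 x) (f2 x)) \<in> mod_hom R (free_mod R k) (free_mod R k')"
proof (rule mod_homI)
  fix x assume "x \<in> carrier (free_mod R k)"
  then show "vsub R (f1 x) (f2 x) \<in> carrier (free_mod R k')"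
    using mod_homD(1)[OF assms(1)] mod_homD(1)[OF assms(2)] vsub_closed by blast
next
  fix x y assume x: "x \<in> carrier (free_mod R k)" and y: "y \<in> carrier (free_mod R k)"
  show "vsub R (f1 (x \<oplus>\<^bsub>free_mod R k\<^esub> y)) (f2 (x \<oplus>\<^bsub>free_mod R k\<^esub> y)) =
        vsub R (f1 x) (f2 x) \<oplus>\<^bsub>free_mod R k'\<^esub> vsub R (f1 y) (f2 y)"
  proof (rule ext)
    fix i
    have c: "f1 x i \<in> carrier R" "f1 y i \<in> carrier R" "f2 x i \<in> carrier R" "f2 y i \<in> carrier R"
      using mod_homD(1)[OF assms(1)] mod_homD(1)[OF assms(2)] x y FM_elem by blast+
    show "vsub R (f1 (x \<oplus>\<^bsub>free_mod R k\<^esub> y)) (f2 (x \<oplus>\<^bsub>free_mod R k\<^esub> y)) i =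
        (vsub R (f1 x) (f2 x) \<oplus>\<^bsub>free_mod R k'\<^esub> vsub R (f1 y) (f2 y)) i"
      using mod_homD(2)[OF assms(1) x y] mod_homD(2)[OF assms(2) x y] c
      by (simp add: vsub_def) algebra
  qed
next
  fix a x assume a: "a \<in> carrier R" and x: "x \<in> carrier (free_mod R k)"
  show "vsub R (f1 (a \<odot>\<^bsub>free_mod R k\<^esub> x)) (f2 (a \<odot>\<^bsub>free_mod R k\<^esub> x)) =
        a \<odot>\<^bsub>free_mod R k'\<^esub> vsub R (f1 x) (f2 x)"
  proof (rule ext)
    fix i
    have c: "f1 x i \<in> carrier R" "f2 x i \<in> carrier R"
      using mod_homD(1)[OF assms(1)] mod_homD(1)[OF assms(2)] x FM_elem by blast+
    show "vsub R (f1 (a \<odot>\<^bsub>free_mod R k\<^esub> x)) (f2 (a \<odot>\<^bsub>free_mod R k\<^esub> x)) i =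
        (a \<odot>\<^bsub>free_mod R k'\<^esub> vsub R (f1 x) (f2 x)) i"
      using mod_homD(3)[OF assms(1) a x] mod_homD(3)[OF assms(2) a x] c a
      by (simp add: vsub_def) algebra
  qed
qed

lemma smult_hom: "a \<in> carrier R \<Longrightarrow> (\<lambda>x. (\<lambda>i. a \<otimes> x i)) \<in> mod_hom R (free_mod R k) (free_mod R k)"
proof (rule mod_homI)
  fix x y assume "a \<in> carrier R" "x \<in> carrier (free_mod R k)" "y \<in> carrier (free_mod R k)"
  then show "(\<lambda>i. a \<otimes> (x \<oplus>\<^bsub>free_mod R k\<^esub> y) i) = (\<lambda>i. a \<otimes> x i) \<oplus>\<^bsub>free_mod R k\<^esub> (\<lambda>i. a \<otimes> y i)"
    by (auto simp: FM_elem r_distr)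
next
  fix b x assume "a \<in> carrier R" "b \<in> carrier R" "x \<in> carrier (free_mod R k)"
  then show "(\<lambda>i. a \<otimes> (b \<odot>\<^bsub>free_mod R k\<^esub> x) i) = b \<odot>\<^bsub>free_mod R k\<^esub> (\<lambda>i. a \<otimes> x i)"
    by (auto simp: FM_elem m_lcomm)
qed auto

lemma id_hom: "(\<lambda>x. x) \<in> mod_hom R X X"
  by (rule mod_homI) auto

lemma resD:
  assumes "free_resolution R X n \<epsilon> d"
  shows "\<epsilon> \<in> mod_hom R (free_mod R (n 0)) X"
    and "\<epsilon> ` carrier (free_mod R (n 0)) = carrier X"
    and "\<And>i. d (Suc i) \<in> mod_hom R (free_mod R (n (Suc i))) (free_mod R (n i))"
    and "mod_kernel (free_mod R (n 0)) X \<epsilon> = d 1 ` carrier (free_mod R (n 1))"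
    and "\<And>i. mod_kernel (free_mod R (n (Suc i))) (free_mod R (n i)) (d (Suc i))
            = d (Suc (Suc i)) ` carrier (free_mod R (n (Suc (Suc i))))"
  using assms unfolding free_resolution_def by auto

lemma res_dd:
  assumes "free_resolution R X n \<epsilon> d" "x \<in> carrier (free_mod R (n (Suc (Suc k))))"
  shows "d (Suc k) (d (Suc (Suc k)) x) = (\<lambda>i. \<zero>)"
proof -
  have "d (Suc (Suc k)) x \<in> mod_kernel (free_mod R (n (Suc k))) (free_mod R (n k)) (d (Suc k))"
    using resD(5)[OF assms(1), of k] assms(2) by blast
  then show ?thesis by (simp add: mod_kernel_def)
qed

lemma res_ed:
  assumes "free_resolution R X n \<epsilon> d" "x \<in> carrier (free_mod R (n 1))"
  shows "\<epsilon> (d 1 x) = \<zero>\<^bsub>X\<^esub>"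
proof -
  have "d 1 x \<in> mod_kernel (free_mod R (n 0)) X \<epsilon>"
    using resD(4)[OF assms(1)] assms(2) by blast
  then show ?thesis by (simp add: mod_kernel_def)
qed

lemma stable_sub_ext:
  assumes X: "module R X" and N: "module R N" and r: "r \<in> stable_ann R X"
    and res: "free_resolution R X n \<epsilon> d" and i: "0 < i"
    and f: "f \<in> mod_hom R (free_mod R (n i)) N"
    and cyc: "\<forall>y\<in>carrier (free_mod R (n (Suc i))). f (d (Suc i) y) = \<zero>\<^bsub>N\<^esub>"
  shows "\<exists>g \<in> mod_hom R (free_mod R (n (i - 1))) N. \<forall>x\<in>carrier (free_mod R (n i)). r \<odot>\<^bsub>N\<^esub> f x = g (d i x)"
proof -
  interpret X: module R X by fact
  interpret N: module R N by fact
  have rc: "r \<in> carrier R" using r by (simp add: stable_ann_def)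
  obtain m g h where g: "g \<in> mod_hom R X (free_mod R m)" and h: "h \<in> mod_hom R (free_mod R m) X"
    and hg: "\<And>x. x \<in> carrier X \<Longrightarrow> h (g x) = r \<odot>\<^bsub>X\<^esub> x"
  proof -
    have "\<forall>\<phi>\<in>mod_hom R X X. \<exists>n g h. g \<in> mod_hom R X (free_mod R n) \<and> h \<in> mod_hom R (free_mod R n) X \<and>
       (\<forall>x\<in>carrier X. h (g x) = r \<odot>\<^bsub>X\<^esub> \<phi> x)" using r unfolding stable_ann_def by blast
    from bspec[OF this id_hom[of X]] show ?thesis using that by blast
  qed
  note eps = resD(1)[OF res] and epsurj = resD(2)[OF res] and dh = resD(3)[OF res]
  obtain H where H: "H \<in> mod_hom R (free_mod R m) (free_mod R (n 0))"
    and eH: "\<And>v. v \<in> carrier (free_mod R m) \<Longrightarrow> \<epsilon> (H v) = h v"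
    using lift[OF X h eps] epsurj mod_homD(1)[OF h] by metis
  define \<alpha> where "\<alpha> x = H (g (\<epsilon> x))" for x
  have \<alpha>: "\<alpha> \<in> mod_hom R (free_mod R (n 0)) (free_mod R (n 0))"
    unfolding \<alpha>_def by (intro mod_hom_comp[OF mod_hom_comp[OF eps g] H])
  have e\<alpha>: "\<epsilon> (\<alpha> x) = r \<odot>\<^bsub>X\<^esub> \<epsilon> x" if "x \<in> carrier (free_mod R (n 0))" for x
    using that eH hg mod_homD(1)[OF eps] mod_homD(1)[OF g] by (simp add: \<alpha>_def)
  have \<alpha>d: "\<alpha> (d 1 x) = (\<lambda>i. \<zero>)" if "x \<in> carrier (free_mod R (n 1))" for x
  proof -
    have "g \<zero>\<^bsub>X\<^esub> = (\<lambda>i. \<zero>)" using mod_hom_zero[OF X module_FM g] by simp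
    moreover have "H (\<lambda>i. \<zero>) = (\<lambda>i. \<zero>)" using hom_FM_zero[OF module_FM H] by simp
    ultimately show ?thesis using res_ed[OF res that] by (simp add: \<alpha>_def)
  qed
  define Q where "Q k sk h \<longleftrightarrow> h \<in> mod_hom R (free_mod R (n (Suc k))) (free_mod R (n (Suc (Suc k)))) \<and>
     (\<forall>x\<in>carrier (free_mod R (n (Suc k))). d (Suc (Suc k)) (h x) = vsub R (\<lambda>i. r \<otimes> x i) (sk (d (Suc k) x)))" for k sk h
  define P0 where "P0 h \<longleftrightarrow> h \<in> mod_hom R (free_mod R (n 0)) (free_mod R (n 1)) \<and>
     (\<forall>x\<in>carrier (free_mod R (n 0)). d 1 (h x) = vsub R (\<lambda>i. r \<otimes> x i) (\<alpha> x))" for h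
  define s0 where "s0 = (SOME h. P0 h)"
  define s where "s = rec_nat s0 (\<lambda>k sk. SOME h. Q k sk h)"
  have s0': "s 0 = s0" by (simp add: s_def)
  have sS: "s (Suc k) = (SOME h. Q k (s k) h)" for k by (simp add: s_def)
  define pv where "pv k x = (case k of 0 \<Rightarrow> \<alpha> x | Suc j \<Rightarrow> s j (d (Suc j) x))" for k x
  define P where "P k \<longleftrightarrow> s k \<in> mod_hom R (free_mod R (n k)) (free_mod R (n (Suc k))) \<and>
     (\<forall>x\<in>carrier (free_mod R (n k)). d (Suc k) (s k x) = vsub R (\<lambda>i. r \<otimes> x i) (pv k x))" for k
  have P: "P k" for k
  proof (induction k rule: less_induct)
    case (less k)
    show ?case
    proof (cases k)
      case 0
      have "\<exists>h \<in> mod_hom R (free_mod R (n 0)) (free_mod R (n 1)).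
          \<forall>x\<in>carrier (free_mod R (n 0)). d 1 (h x) = vsub R (\<lambda>i. r \<otimes> x i) (\<alpha> x)"
      proof (rule lift[OF module_FM])
        show "(\<lambda>x. vsub R (\<lambda>i. r \<otimes> x i) (\<alpha> x)) \<in> mod_hom R (free_mod R (n 0)) (free_mod R (n 0))"
          by (rule vsub_hom[OF smult_hom[OF rc] \<alpha>])
        show "d 1 \<in> mod_hom R (free_mod R (n 1)) (free_mod R (n 0))" using dh[of 0] by simp
        fix v assume v: "v \<in> carrier (free_mod R (n 0))"
        have vc: "vsub R (\<lambda>i. r \<otimes> v i) (\<alpha> v) \<in> carrier (free_mod R (n 0))"
          using vsub_closed FM_smult_closed[OF rc v] mod_homD(1)[OF \<alpha> v] by blast
        have "\<epsilon> (vsub R (\<lambda>i. r \<otimes> v i) (\<alpha> v)) = \<epsilon> (\<lambda>i. r \<otimes> v i) \<ominus>\<^bsub>X\<^esub> \<epsilon> (\<alpha> v)"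
          by (rule hom_vsub[OF X eps FM_smult_closed[OF rc v] mod_homD(1)[OF \<alpha> v]])
        also have "\<dots> = \<zero>\<^bsub>X\<^esub>"
          using hom_FM_smult[OF eps rc v] e\<alpha>[OF v] mod_homD(1)[OF eps v] rc
          by (simp add: X.r_neg X.minus_eq)
        finally have "vsub R (\<lambda>i. r \<otimes> v i) (\<alpha> v) \<in> mod_kernel (free_mod R (n 0)) X \<epsilon>"
          using vc by (simp add: mod_kernel_def)
        then show "vsub R (\<lambda>i. r \<otimes> v i) (\<alpha> v) \<in> d 1 ` carrier (free_mod R (n 1))"
          using resD(4)[OF res] by simp
      qed
      then obtain h0 where "P0 h0" unfolding P0_def by blast
      then have "P0 (s 0)" unfolding s0' s0_def by (rule someI[where P=P0])
      then show ?thesis using 0 by (simp add: P_def pv_def P0_def)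
    next
      case (Suc j)
      have Pj: "P j" using less Suc by simp
      have sj: "s j \<in> mod_hom R (free_mod R (n j)) (free_mod R (n (Suc j)))" using Pj P_def by blast
      have pvz: "pv j (d (Suc j) x) = (\<lambda>i. \<zero>)" if x: "x \<in> carrier (free_mod R (n (Suc j)))" for x
      proof (cases j)
        case 0 then show ?thesis using \<alpha>d x by (simp add: pv_def)
      next
        case (Suc j')
        have "P j'" using less \<open>k = Suc j\<close> Suc by simp
        then have sj': "s j' \<in> mod_hom R (free_mod R (n j')) (free_mod R (n (Suc j')))" using P_def by blast
        have "d (Suc j') (d (Suc j) x) = (\<lambda>i. \<zero>)" using res_dd[OF res, of x j'] x Suc by simp
        then show ?thesis using Suc hom_FM_zero[OF module_FM sj'] by (simp add: pv_def)
      qed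
      have "\<exists>h \<in> mod_hom R (free_mod R (n (Suc j))) (free_mod R (n (Suc (Suc j)))).
          \<forall>x\<in>carrier (free_mod R (n (Suc j))). d (Suc (Suc j)) (h x) = vsub R (\<lambda>i. r \<otimes> x i) (s j (d (Suc j) x))"
      proof (rule lift[OF module_FM])
        show "(\<lambda>x. vsub R (\<lambda>i. r \<otimes> x i) (s j (d (Suc j) x))) \<in> mod_hom R (free_mod R (n (Suc j))) (free_mod R (n (Suc j)))"
          by (rule vsub_hom[OF smult_hom[OF rc] mod_hom_comp[OF dh sj]])
        show "d (Suc (Suc j)) \<in> mod_hom R (free_mod R (n (Suc (Suc j)))) (free_mod R (n (Suc j)))" using dh by simp
        fix v assume v: "v \<in> carrier (free_mod R (n (Suc j)))"
        have y: "d (Suc j) v \<in> carrier (free_mod R (n j))" using mod_homD(1)[OF dh v] .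
        have sy: "s j (d (Suc j) v) \<in> carrier (free_mod R (n (Suc j)))" using mod_homD(1)[OF sj y] .
        have vc: "vsub R (\<lambda>i. r \<otimes> v i) (s j (d (Suc j) v)) \<in> carrier (free_mod R (n (Suc j)))"
          using vsub_closed FM_smult_closed[OF rc v] sy by blast
        have "d (Suc j) (vsub R (\<lambda>i. r \<otimes> v i) (s j (d (Suc j) v))) =
              d (Suc j) (\<lambda>i. r \<otimes> v i) \<ominus>\<^bsub>free_mod R (n j)\<^esub> d (Suc j) (s j (d (Suc j) v))"
          by (rule hom_vsub[OF module_FM dh FM_smult_closed[OF rc v] sy])
        also have "\<dots> = (\<lambda>i. r \<otimes> d (Suc j) v i) \<ominus>\<^bsub>free_mod R (n j)\<^esub> vsub R (\<lambda>i. r \<otimes> d (Suc j) v i) (\<lambda>i. \<zero>)"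
          using hom_FM_smult[OF dh rc v] Pj y pvz[OF v] by (simp add: P_def)
        also have "\<dots> = (\<lambda>i. \<zero>)"
        proof -
          interpret F: module R "free_mod R (n j)" by (rule module_FM)
          have "vsub R (\<lambda>i. r \<otimes> d (Suc j) v i) (\<lambda>i. \<zero>) = (\<lambda>i. r \<otimes> d (Suc j) v i)"
            using y rc FM_elem by (auto simp: vsub_def minus_eq)
          then show ?thesis using FM_smult_closed[OF rc y] F.r_neg by (simp add: F.minus_eq)
        qed
        finally have "vsub R (\<lambda>i. r \<otimes> v i) (s j (d (Suc j) v)) \<in> mod_kernel (free_mod R (n (Suc j))) (free_mod R (n j)) (d (Suc j))"
          using vc by (simp add: mod_kernel_def)
        then show "vsub R (\<lambda>i. r \<otimes> v i) (s j (d (Suc j) v)) \<in> d (Suc (Suc j)) ` carrier (free_mod R (n (Suc (Suc j))))"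
          using resD(5)[OF res, of j] by simp
      qed
      then obtain h0 where "Q j (s j) h0" unfolding Q_def by blast
      then have "Q j (s j) (s (Suc j))" unfolding sS by (rule someI[where P="Q j (s j)"])
      then show ?thesis using Suc by (simp add: P_def pv_def Q_def)
    qed
  qed
  obtain j where j: "i = Suc j" using i by (cases i) auto
  have f': "f \<in> mod_hom R (free_mod R (n (Suc j))) N" using f j by simp
  have cyc': "\<forall>y\<in>carrier (free_mod R (n (Suc (Suc j)))). f (d (Suc (Suc j)) y) = \<zero>\<^bsub>N\<^esub>" using cyc j by simp
  have sj: "s j \<in> mod_hom R (free_mod R (n j)) (free_mod R (n (Suc j)))" using P[of j] P_def by blast
  have si: "s (Suc j) \<in> mod_hom R (free_mod R (n (Suc j))) (free_mod R (n (Suc (Suc j))))" using P[of "Suc j"] P_def by blast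
  have "\<exists>g \<in> mod_hom R (free_mod R (n j)) N. \<forall>x\<in>carrier (free_mod R (n (Suc j))). r \<odot>\<^bsub>N\<^esub> f x = g (d (Suc j) x)"
  proof (intro bexI ballI)
    show "(\<lambda>x. f (s j x)) \<in> mod_hom R (free_mod R (n j)) N"
      using mod_hom_comp[OF sj f'] by simp
    fix x assume x: "x \<in> carrier (free_mod R (n (Suc j)))"
    have y: "d (Suc j) x \<in> carrier (free_mod R (n j))" using mod_homD(1)[OF dh x] .
    have a: "s (Suc j) x \<in> carrier (free_mod R (n (Suc (Suc j))))" using mod_homD(1)[OF si x] .
    have da: "d (Suc (Suc j)) (s (Suc j) x) \<in> carrier (free_mod R (n (Suc j)))" using mod_homD(1)[OF dh a] .
    have b: "s j (d (Suc j) x) \<in> carrier (free_mod R (n (Suc j)))" using mod_homD(1)[OF sj y] .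
    have eq: "d (Suc (Suc j)) (s (Suc j) x) = vsub R (\<lambda>i. r \<otimes> x i) (s j (d (Suc j) x))"
      using P[of "Suc j"] x by (simp add: P_def pv_def)
    have "(\<lambda>l. r \<otimes> x l) = (\<lambda>l. d (Suc (Suc j)) (s (Suc j) x) l \<oplus> s j (d (Suc j) x) l)"
    proof (rule ext)
      fix l
      have c: "x l \<in> carrier R" "s j (d (Suc j) x) l \<in> carrier R" using x b FM_elem by blast+
      show "r \<otimes> x l = d (Suc (Suc j)) (s (Suc j) x) l \<oplus> s j (d (Suc j) x) l"
        unfolding eq vsub_def using c rc by algebra
    qed
    then have "r \<odot>\<^bsub>N\<^esub> f x = f (d (Suc (Suc j)) (s (Suc j) x)) \<oplus>\<^bsub>N\<^esub> f (s j (d (Suc j) x))"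
      using hom_FM_smult[OF f' rc x] hom_FM_add[OF f' da b] by simp
    also have "\<dots> = f (s j (d (Suc j) x))"
      using cyc' a mod_homD(1)[OF f' b] by simp
    finally show "r \<odot>\<^bsub>N\<^esub> f x = f (s j (d (Suc j) x))" .
  qed
  then show ?thesis using j by simp
qed

end



definition subm :: "'a ring \<Rightarrow> nat \<Rightarrow> (nat \<Rightarrow> 'a) set \<Rightarrow> bool" where
  "subm R k S \<longleftrightarrow> S \<subseteq> carrier (free_mod R k) \<and> (\<lambda>i. \<zero>\<^bsub>R\<^esub>) \<in> S \<and>
     (\<forall>x\<in>S. \<forall>y\<in>S. (\<lambda>i. x i \<oplus>\<^bsub>R\<^esub> y i) \<in> S) \<and> (\<forall>a\<in>carrier R. \<forall>x\<in>S. (\<lambda>i. a \<otimes>\<^bsub>R\<^esub> x i) \<in> S)"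

context cr begin

lemma idealI':
  assumes "I \<subseteq> carrier R" "\<zero> \<in> I" "\<And>a b. a \<in> I \<Longrightarrow> b \<in> I \<Longrightarrow> a \<oplus> b \<in> I"
    "\<And>a x. a \<in> I \<Longrightarrow> x \<in> carrier R \<Longrightarrow> x \<otimes> a \<in> I"
  shows "ideal I R"
proof (rule idealI[OF ring_axioms])
  have neg: "\<ominus> a \<in> I" if a: "a \<in> I" for a
  proof -
    have "\<ominus> a = (\<ominus> \<one>) \<otimes> a" using a assms(1) by (simp add: l_minus subsetD)
    then show "\<ominus> a \<in> I" using assms(4)[OF a, of "\<ominus> \<one>"] by simp
  qed
  show "subgroup I (add_monoid R)"
    by (rule add.subgroupI) (use assms neg in \<open>auto simp: a_inv_def[symmetric]\<close>)
next
  fix a x assume "a \<in> I" "x \<in> carrier R" then show "x \<otimes> a \<in> I" by (rule assms(4))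
next
  fix a x assume a: "a \<in> I" "x \<in> carrier R" then show "a \<otimes> x \<in> I"
    using assms(4)[OF a] assms(1) m_comm[of a x] by (auto simp: subsetD)
qed

lemma rsum_indicator: "j0 < q \<Longrightarrow> (\<And>j. j < q \<Longrightarrow> a j \<in> carrier R) \<Longrightarrow>
    rsum R (\<lambda>j. (if j = j0 then \<one> else \<zero>) \<otimes> a j) q = a j0"
proof (induction q)
  case 0 then show ?case by simp
next
  case (Suc q)
  show ?case
  proof (cases "j0 = q")
    case True
    have "rsum R (\<lambda>j. (if j = j0 then \<one> else \<zero>) \<otimes> a j) q = rsum R (\<lambda>j. \<zero>) q"
      by (rule rsum_cong) (use True Suc.prems in auto)
    then show ?thesis using True Suc.prems by (simp add: rsum_zero)
  next
    case False
    then show ?thesis using Suc by simp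
  qed
qed

lemma comb_ideal:
  assumes a: "\<And>j. j < q \<Longrightarrow> a j \<in> carrier R"
  shows "ideal {rsum R (\<lambda>j. c j \<otimes> a j) q | c. \<forall>j. c j \<in> carrier R} R"
proof (rule idealI')
  show "{rsum R (\<lambda>j. c j \<otimes> a j) q | c. \<forall>j. c j \<in> carrier R} \<subseteq> carrier R"
    using a by (auto intro!: rsum_closed)
  have "rsum R (\<lambda>j. \<zero> \<otimes> a j) q = \<zero>"
    using rsum_cong[of q "\<lambda>j. \<zero> \<otimes> a j" "\<lambda>j. \<zero>"] a rsum_zero by simp
  then show "\<zero> \<in> {rsum R (\<lambda>j. c j \<otimes> a j) q | c. \<forall>j. c j \<in> carrier R}"
    by (intro CollectI exI[of _ "\<lambda>j. \<zero>"]) auto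
next
  fix u v assume "u \<in> {rsum R (\<lambda>j. c j \<otimes> a j) q | c. \<forall>j. c j \<in> carrier R}"
    "v \<in> {rsum R (\<lambda>j. c j \<otimes> a j) q | c. \<forall>j. c j \<in> carrier R}"
  then obtain c c' where c: "\<forall>j. c j \<in> carrier R" "u = rsum R (\<lambda>j. c j \<otimes> a j) q"
    and c': "\<forall>j. c' j \<in> carrier R" "v = rsum R (\<lambda>j. c' j \<otimes> a j) q" by blast
  have "rsum R (\<lambda>j. (c j \<oplus> c' j) \<otimes> a j) q = rsum R (\<lambda>j. c j \<otimes> a j \<oplus> c' j \<otimes> a j) q"
    by (rule rsum_cong) (use a c c' in \<open>simp add: l_distr\<close>)
  also have "\<dots> = u \<oplus> v" using c c' a by (simp add: rsum_add)
  finally show "u \<oplus> v \<in> {rsum R (\<lambda>j. c j \<otimes> a j) q | c. \<forall>j. c j \<in> carrier R}"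
    using c c' by (intro CollectI exI[of _ "\<lambda>j. c j \<oplus> c' j"]) auto
next
  fix u x assume "u \<in> {rsum R (\<lambda>j. c j \<otimes> a j) q | c. \<forall>j. c j \<in> carrier R}" and x: "x \<in> carrier R"
  then obtain c where c: "\<forall>j. c j \<in> carrier R" "u = rsum R (\<lambda>j. c j \<otimes> a j) q" by blast
  have "x \<otimes> u = rsum R (\<lambda>j. x \<otimes> (c j \<otimes> a j)) q" using c a x by (simp add: rsum_lmult)
  also have "\<dots> = rsum R (\<lambda>j. (x \<otimes> c j) \<otimes> a j) q"
    by (rule rsum_cong) (use a c x in \<open>simp add: m_assoc\<close>)
  finally show "x \<otimes> u \<in> {rsum R (\<lambda>j. c j \<otimes> a j) q | c. \<forall>j. c j \<in> carrier R}"
    using c x by (intro CollectI exI[of _ "\<lambda>j. x \<otimes> c j"]) auto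
qed

lemma lc_hom:
  assumes b: "\<And>j. j < q \<Longrightarrow> b j \<in> carrier (free_mod R k')"
  shows "(\<lambda>c. \<lambda>i. rsum R (\<lambda>j. c j \<otimes> b j i) q) \<in> mod_hom R (free_mod R q) (free_mod R k')"
proof (rule mod_homI)
  have bc: "j < q \<Longrightarrow> b j i \<in> carrier R" for j i using b FM_elem by blast
  {
    fix x assume x: "x \<in> carrier (free_mod R q)"
    show "(\<lambda>i. rsum R (\<lambda>j. x j \<otimes> b j i) q) \<in> carrier (free_mod R k')"
      unfolding FM_carrier
    proof (intro conjI allI impI)
      fix i assume "i < k'" then show "rsum R (\<lambda>j. x j \<otimes> b j i) q \<in> carrier R"
        using x bc by (auto intro!: rsum_closed simp: FM_elem)
    next
      fix i assume "k' \<le> i"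
      have "x j \<otimes> b j i = \<zero>" if jk: "j < q" for j
      proof -
        have "b j \<in> carrier (free_mod R k')" using b jk by auto
        then have "b j i = \<zero>" using \<open>k' \<le> i\<close> unfolding FM_carrier by blast
        then show ?thesis using x FM_elem by simp
      qed
      then show "rsum R (\<lambda>j. x j \<otimes> b j i) q = \<zero>" using rsum_cong[of q _ "\<lambda>j. \<zero>"] rsum_zero by simp
    qed
  }
  {
    fix x y assume x: "x \<in> carrier (free_mod R q)" and y: "y \<in> carrier (free_mod R q)"
    show "(\<lambda>i. rsum R (\<lambda>j. (x \<oplus>\<^bsub>free_mod R q\<^esub> y) j \<otimes> b j i) q) =
       (\<lambda>i. rsum R (\<lambda>j. x j \<otimes> b j i) q) \<oplus>\<^bsub>free_mod R k'\<^esub> (\<lambda>i. rsum R (\<lambda>j. y j \<otimes> b j i) q)"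
    proof (rule ext)
      fix i
      have "rsum R (\<lambda>j. (x j \<oplus> y j) \<otimes> b j i) q = rsum R (\<lambda>j. x j \<otimes> b j i \<oplus> y j \<otimes> b j i) q"
        by (rule rsum_cong) (use x y bc in \<open>auto simp: FM_elem l_distr\<close>)
      also have "\<dots> = rsum R (\<lambda>j. x j \<otimes> b j i) q \<oplus> rsum R (\<lambda>j. y j \<otimes> b j i) q"
        by (rule rsum_add) (use x y bc in \<open>auto simp: FM_elem\<close>)
      finally show "rsum R (\<lambda>j. (x \<oplus>\<^bsub>free_mod R q\<^esub> y) j \<otimes> b j i) q =
        ((\<lambda>i. rsum R (\<lambda>j. x j \<otimes> b j i) q) \<oplus>\<^bsub>free_mod R k'\<^esub> (\<lambda>i. rsum R (\<lambda>j. y j \<otimes> b j i) q)) i" by simp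
    qed
  }
  {
    fix a x assume a: "a \<in> carrier R" and x: "x \<in> carrier (free_mod R q)"
    show "(\<lambda>i. rsum R (\<lambda>j. (a \<odot>\<^bsub>free_mod R q\<^esub> x) j \<otimes> b j i) q) = a \<odot>\<^bsub>free_mod R k'\<^esub> (\<lambda>i. rsum R (\<lambda>j. x j \<otimes> b j i) q)"
    proof (rule ext)
      fix i
      have "rsum R (\<lambda>j. (a \<otimes> x j) \<otimes> b j i) q = rsum R (\<lambda>j. a \<otimes> (x j \<otimes> b j i)) q"
        by (rule rsum_cong) (use a x bc in \<open>auto simp: FM_elem m_assoc\<close>)
      also have "\<dots> = a \<otimes> rsum R (\<lambda>j. x j \<otimes> b j i) q"
        by (rule rsum_lmult[symmetric]) (use a x bc in \<open>auto simp: FM_elem\<close>)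
      finally show "rsum R (\<lambda>j. (a \<odot>\<^bsub>free_mod R q\<^esub> x) j \<otimes> b j i) q = (a \<odot>\<^bsub>free_mod R k'\<^esub> (\<lambda>i. rsum R (\<lambda>j. x j \<otimes> b j i) q)) i" by simp
    qed
  }
qed

lemma lc_in_subm:
  assumes S: "subm R k S" and b: "\<And>j. j < q \<Longrightarrow> b j \<in> S" and c: "\<And>j. c j \<in> carrier R"
  shows "(\<lambda>i. rsum R (\<lambda>j. c j \<otimes> b j i) q) \<in> S"
  using b
proof (induction q)
  case 0 then show ?case using S by (simp add: subm_def)
next
  case (Suc q)
  have "(\<lambda>i. rsum R (\<lambda>j. c j \<otimes> b j i) q) \<in> S" using Suc by simp
  moreover have "(\<lambda>i. c q \<otimes> b q i) \<in> S" using S Suc.prems c by (simp add: subm_def)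
  ultimately show ?case using S by (simp add: subm_def)
qed

lemma hom_widen: "f \<in> mod_hom R A (free_mod R k) \<Longrightarrow> k \<le> k' \<Longrightarrow> f \<in> mod_hom R A (free_mod R k')"
  unfolding mod_hom_def by (auto simp: Pi_def intro: FM_mono)

lemma hom_plus:
  assumes "f1 \<in> mod_hom R A (free_mod R k)" "f2 \<in> mod_hom R A (free_mod R k)" "module R A"
  shows "(\<lambda>x. \<lambda>i. f1 x i \<oplus> f2 x i) \<in> mod_hom R A (free_mod R k)"
proof (rule mod_homI)
  fix x assume "x \<in> carrier A" then show "(\<lambda>i. f1 x i \<oplus> f2 x i) \<in> carrier (free_mod R k)"
    using mod_homD(1)[OF assms(1)] mod_homD(1)[OF assms(2)] by simp
next
  fix x y assume x: "x \<in> carrier A" and y: "y \<in> carrier A"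
  show "(\<lambda>i. f1 (x \<oplus>\<^bsub>A\<^esub> y) i \<oplus> f2 (x \<oplus>\<^bsub>A\<^esub> y) i) = (\<lambda>i. f1 x i \<oplus> f2 x i) \<oplus>\<^bsub>free_mod R k\<^esub> (\<lambda>i. f1 y i \<oplus> f2 y i)"
  proof (rule ext)
    fix i
    have c: "f1 x i \<in> carrier R" "f1 y i \<in> carrier R" "f2 x i \<in> carrier R" "f2 y i \<in> carrier R"
      using mod_homD(1)[OF assms(1)] mod_homD(1)[OF assms(2)] x y FM_elem by blast+
    show "f1 (x \<oplus>\<^bsub>A\<^esub> y) i \<oplus> f2 (x \<oplus>\<^bsub>A\<^esub> y) i = ((\<lambda>i. f1 x i \<oplus> f2 x i) \<oplus>\<^bsub>free_mod R k\<^esub> (\<lambda>i. f1 y i \<oplus> f2 y i)) i"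
      using mod_homD(2)[OF assms(1) x y] mod_homD(2)[OF assms(2) x y] c by simp algebra
  qed
next
  fix a x assume a: "a \<in> carrier R" and x: "x \<in> carrier A"
  show "(\<lambda>i. f1 (a \<odot>\<^bsub>A\<^esub> x) i \<oplus> f2 (a \<odot>\<^bsub>A\<^esub> x) i) = a \<odot>\<^bsub>free_mod R k\<^esub> (\<lambda>i. f1 x i \<oplus> f2 x i)"
  proof (rule ext)
    fix i
    have c: "f1 x i \<in> carrier R" "f2 x i \<in> carrier R"
      using mod_homD(1)[OF assms(1)] mod_homD(1)[OF assms(2)] x FM_elem by blast+
    show "f1 (a \<odot>\<^bsub>A\<^esub> x) i \<oplus> f2 (a \<odot>\<^bsub>A\<^esub> x) i = (a \<odot>\<^bsub>free_mod R k\<^esub> (\<lambda>i. f1 x i \<oplus> f2 x i)) i"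
      using mod_homD(3)[OF assms(1) a x] mod_homD(3)[OF assms(2) a x] c a by (simp add: r_distr)
  qed
qed

end


context cr begin

lemma subm_vsub: "subm R k S \<Longrightarrow> x \<in> S \<Longrightarrow> y \<in> S \<Longrightarrow> vsub R x y \<in> S"
proof -
  assume S: "subm R k S" and x: "x \<in> S" and y: "y \<in> S"
  have xc: "x \<in> carrier (free_mod R k)" "y \<in> carrier (free_mod R k)" using S x y by (auto simp: subm_def)
  have "(\<lambda>i. (\<ominus> \<one>) \<otimes> y i) \<in> S" using S y by (simp add: subm_def)
  then have "(\<lambda>i. x i \<oplus> (\<ominus> \<one>) \<otimes> y i) \<in> S" using S x by (simp add: subm_def)
  moreover have "(\<lambda>i. x i \<oplus> (\<ominus> \<one>) \<otimes> y i) = vsub R x y"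
    using xc FM_elem by (auto simp: vsub_def minus_eq l_minus)
  ultimately show ?thesis by simp
qed

lemma FG:
  assumes noeth: "\<forall>I. ideal I R \<longrightarrow> (\<exists>A. finite A \<and> A \<subseteq> carrier R \<and> I = Idl A)"
  shows "subm R k S \<Longrightarrow> \<exists>p D. D \<in> mod_hom R (free_mod R p) (free_mod R k) \<and> D ` carrier (free_mod R p) = S"
proof (induction k arbitrary: S)
  case 0
  have "S = {\<lambda>i. \<zero>}"
  proof
    show "S \<subseteq> {\<lambda>i. \<zero>}"
    proof
      fix x assume "x \<in> S"
      then have "x \<in> carrier (free_mod R 0)" using 0 by (auto simp: subm_def)
      then have "x = (\<lambda>i. \<zero>)" unfolding FM_carrier by auto
      then show "x \<in> {\<lambda>i. \<zero>}" by simp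
    qed
  qed (use 0 in \<open>auto simp: subm_def\<close>)
  moreover have "(\<lambda>v. (\<lambda>i. \<zero>)) \<in> mod_hom R (free_mod R 0) (free_mod R 0)"
    by (rule mod_homI) auto
  moreover have "(\<lambda>v. (\<lambda>i. \<zero>)) ` carrier (free_mod R 0) = {\<lambda>i. \<zero>}"
    using FM_zero_closed by blast
  ultimately show ?case by metis
next
  case (Suc k)
  note S = Suc.prems
  have Sc: "v \<in> S \<Longrightarrow> v \<in> carrier (free_mod R (Suc k))" for v using S by (auto simp: subm_def)
  define I where "I = (\<lambda>v. v k) ` S"
  have "ideal I R"
  proof (rule idealI')
    show "I \<subseteq> carrier R" using Sc FM_elem by (auto simp: I_def)
    have "(\<lambda>i. \<zero>) \<in> S" using S unfolding subm_def by blast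
    then show "\<zero> \<in> I" unfolding I_def by (rule rev_image_eqI) simp
  next
    fix a b assume "a \<in> I" "b \<in> I"
    then obtain u v where "u \<in> S" "v \<in> S" "a = u k" "b = v k" by (auto simp: I_def)
    moreover have "(\<lambda>i. u i \<oplus> v i) \<in> S" using S \<open>u \<in> S\<close> \<open>v \<in> S\<close> unfolding subm_def by blast
    ultimately show "a \<oplus> b \<in> I" unfolding I_def by (metis (no_types, lifting) rev_image_eqI)
  next
    fix a x assume "a \<in> I" "x \<in> carrier R"
    then obtain u where "u \<in> S" "a = u k" by (auto simp: I_def)
    moreover have "(\<lambda>i. x \<otimes> u i) \<in> S" using S \<open>u \<in> S\<close> \<open>x \<in> carrier R\<close> unfolding subm_def by blast
    ultimately show "x \<otimes> a \<in> I" unfolding I_def by (metis (no_types, lifting) rev_image_eqI)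
  qed
  then obtain A where A: "finite A" "A \<subseteq> carrier R" "I = Idl A" using noeth by blast
  obtain q :: nat and a where qa': "A = a ` {i. i < q}" using finite_imp_nat_seg_image_inj_on[OF A(1)] by blast
  then have qa: "a ` {i. i < q} = A" by simp
  have aI: "j < q \<Longrightarrow> a j \<in> I" for j using qa A genideal_self[OF A(2)] by auto
  have ac: "j < q \<Longrightarrow> a j \<in> carrier R" for j using qa A by auto
  have "\<forall>j. \<exists>s. j < q \<longrightarrow> s \<in> S \<and> s k = a j"
  proof
    fix j show "\<exists>s. j < q \<longrightarrow> s \<in> S \<and> s k = a j"
    proof (cases "j < q")
      case True
      from aI[OF True] obtain s where "s \<in> S" "a j = s k" unfolding I_def by blast
      then show ?thesis by metis
    qed auto
  qed
  then obtain sv where sv: "\<And>j. j < q \<Longrightarrow> sv j \<in> S \<and> sv j k = a j" by metis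
  define J where "J = {rsum R (\<lambda>j. c j \<otimes> a j) q | c. \<forall>j. c j \<in> carrier R}"
  have "ideal J R" unfolding J_def by (rule comb_ideal[OF ac])
  moreover have "A \<subseteq> J"
  proof
    fix x assume "x \<in> A"
    then obtain j0 where j0: "j0 < q" "x = a j0" using qa by auto
    have "x = rsum R (\<lambda>j. (if j = j0 then \<one> else \<zero>) \<otimes> a j) q" using rsum_indicator[OF j0(1) ac] j0 by simp
    then show "x \<in> J" unfolding J_def by (intro CollectI exI[of _ "\<lambda>j. if j = j0 then \<one> else \<zero>"]) auto
  qed
  ultimately have IJ: "I \<subseteq> J" using genideal_minimal A(3) by blast
  define S' where "S' = {v \<in> S. v k = \<zero>}"
  have "subm R k S'"
    unfolding subm_def
  proof (intro conjI ballI)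
    show "S' \<subseteq> carrier (free_mod R k)"
    proof
      fix v assume "v \<in> S'"
      then have "v \<in> carrier (free_mod R (Suc k))" "v k = \<zero>" using Sc by (auto simp: S'_def)
      then show "v \<in> carrier (free_mod R k)" unfolding FM_carrier
      proof (intro conjI allI impI)
        fix i assume "i < k" then show "v i \<in> carrier R" using FM_elem \<open>v \<in> carrier (free_mod R (Suc k))\<close> by blast
      next
        fix i assume ik: "k \<le> i"
        show "v i = \<zero>"
        proof (cases "i = k")
          case False then have "Suc k \<le> i" using ik by simp
          then show ?thesis using \<open>v \<in> carrier (free_mod R (Suc k))\<close> unfolding FM_carrier by blast
        qed (use \<open>v k = \<zero>\<close> in simp)
      qed
    qed
    show "(\<lambda>i. \<zero>) \<in> S'" using S by (auto simp: S'_def subm_def)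
  next
    fix x y assume "x \<in> S'" "y \<in> S'" then show "(\<lambda>i. x i \<oplus> y i) \<in> S'"
      using S by (auto simp: S'_def subm_def)
  next
    fix a x assume "a \<in> carrier R" "x \<in> S'" then show "(\<lambda>i. a \<otimes> x i) \<in> S'"
      using S by (auto simp: S'_def subm_def)
  qed
  then obtain p' D2 where D2: "D2 \<in> mod_hom R (free_mod R p') (free_mod R k)" and D2i: "D2 ` carrier (free_mod R p') = S'"
    using Suc.IH by blast
  have svc: "j < q \<Longrightarrow> sv j \<in> carrier (free_mod R (Suc k))" for j using sv Sc by blast
  define D1 where "D1 = (\<lambda>c. \<lambda>i. rsum R (\<lambda>j. c j \<otimes> sv j i) q)"
  have D1: "D1 \<in> mod_hom R (free_mod R q) (free_mod R (Suc k))" unfolding D1_def by (rule lc_hom[OF svc])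
  have D1S: "c \<in> carrier (free_mod R q) \<Longrightarrow> D1 c \<in> S" for c
  proof -
    assume c: "c \<in> carrier (free_mod R q)"
    show ?thesis unfolding D1_def by (rule lc_in_subm[OF S]) (use sv c FM_elem in auto)
  qed
  define D where "D = (\<lambda>w. \<lambda>i. D1 (lo R q w) i \<oplus> D2 (hi q w) i)"
  have hom1: "(\<lambda>w. D1 (lo R q w)) \<in> mod_hom R (free_mod R (q + p')) (free_mod R (Suc k))"
    by (rule mod_hom_comp[OF lo_hom D1])
  have hom2: "(\<lambda>w. D2 (hi q w)) \<in> mod_hom R (free_mod R (q + p')) (free_mod R (Suc k))"
    by (rule hom_widen[OF mod_hom_comp[OF hi_hom D2]]) simp
  have Dh: "D \<in> mod_hom R (free_mod R (q + p')) (free_mod R (Suc k))"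
    unfolding D_def by (rule hom_plus[OF hom1 hom2 module_FM])
  have "D ` carrier (free_mod R (q + p')) = S"
  proof
    show "D ` carrier (free_mod R (q + p')) \<subseteq> S"
    proof
      fix x assume "x \<in> D ` carrier (free_mod R (q + p'))"
      then obtain w where w: "w \<in> carrier (free_mod R (q + p'))" "x = D w" by blast
      have "D1 (lo R q w) \<in> S" using D1S lo_closed[OF w(1)] by blast
      moreover have "D2 (hi q w) \<in> S" using D2i hi_closed[OF w(1)] by (auto simp: S'_def)
      ultimately have "(\<lambda>i. D1 (lo R q w) i \<oplus> D2 (hi q w) i) \<in> S" using S unfolding subm_def by blast
      then show "x \<in> S" using w by (simp add: D_def)
    qed
  next
    show "S \<subseteq> D ` carrier (free_mod R (q + p'))"
    proof
      fix v assume v: "v \<in> S"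
      then have "v k \<in> J" using IJ by (auto simp: I_def)
      then obtain c where c: "\<forall>j. c j \<in> carrier R" "v k = rsum R (\<lambda>j. c j \<otimes> a j) q" by (auto simp: J_def)
      define c' where "c' = lo R q c"
      have c'c: "c' \<in> carrier (free_mod R q)" using c by (auto simp: c'_def lo_def FM_carrier)
      have "D1 c' k = rsum R (\<lambda>j. c j \<otimes> a j) q"
        unfolding D1_def by (rule rsum_cong) (use sv in \<open>auto simp: c'_def lo_def\<close>)
      then have D1k: "D1 c' k = v k" using c by simp
      define v' where "v' = vsub R v (D1 c')"
      have v'S: "v' \<in> S" unfolding v'_def by (rule subm_vsub[OF S v D1S[OF c'c]])
      have "v k \<in> carrier R" using Sc[OF v] FM_elem by blast
      then have "v' k = \<zero>" using D1k by (simp add: v'_def vsub_def minus_eq r_neg)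
      then have "v' \<in> S'" using v'S by (simp add: S'_def)
      then obtain b where b: "b \<in> carrier (free_mod R p')" "D2 b = v'" using D2i by blast
      have wc: "join q c' b \<in> carrier (free_mod R (q + p'))" by (rule join_closed[OF c'c b(1)])
      have "D (join q c' b) = (\<lambda>i. D1 c' i \<oplus> (v i \<ominus> D1 c' i))"
        using b by (simp add: D_def lo_join[OF c'c] hi_join v'_def vsub_def)
      also have "\<dots> = v"
      proof
        fix i
        have "D1 c' i \<in> carrier R" "v i \<in> carrier R"
          using mod_homD(1)[OF D1 c'c] Sc[OF v] FM_elem by blast+
        then show "D1 c' i \<oplus> (v i \<ominus> D1 c' i) = v i" by algebra
      qed
      finally show "v \<in> D ` carrier (free_mod R (q + p'))" using wc by (metis image_eqI)
    qed
  qed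
  then show ?case using Dh by blast
qed

end


context cr begin

lemma kernel_subm:
  assumes A: "module R A" and f: "f \<in> mod_hom R (free_mod R k) A"
  shows "subm R k (mod_kernel (free_mod R k) A f)"
proof -
  interpret A: module R A by fact
  show ?thesis unfolding subm_def mod_kernel_def
  proof (intro conjI ballI)
    show "(\<lambda>i. \<zero>) \<in> {x \<in> carrier (free_mod R k). f x = \<zero>\<^bsub>A\<^esub>}" using hom_FM_zero[OF A f] by simp
  next
    fix x y assume x: "x \<in> {x \<in> carrier (free_mod R k). f x = \<zero>\<^bsub>A\<^esub>}" and y: "y \<in> {x \<in> carrier (free_mod R k). f x = \<zero>\<^bsub>A\<^esub>}"
    then show "(\<lambda>i. x i \<oplus> y i) \<in> {x \<in> carrier (free_mod R k). f x = \<zero>\<^bsub>A\<^esub>}"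
      using hom_FM_add[OF f, of x y] by simp
  next
    fix a x assume a: "a \<in> carrier R" and x: "x \<in> {x \<in> carrier (free_mod R k). f x = \<zero>\<^bsub>A\<^esub>}"
    then show "(\<lambda>i. a \<otimes> x i) \<in> {x \<in> carrier (free_mod R k). f x = \<zero>\<^bsub>A\<^esub>}"
      using hom_FM_smult[OF f a, of x] by simp
  qed auto
qed

definition CH :: "nat \<Rightarrow> (nat \<Rightarrow> 'a) set \<Rightarrow> nat \<times> ((nat \<Rightarrow> 'a) \<Rightarrow> (nat \<Rightarrow> 'a))" where
  "CH k S = (SOME pD. snd pD \<in> mod_hom R (free_mod R (fst pD)) (free_mod R k) \<and> snd pD ` carrier (free_mod R (fst pD)) = S)"

lemma CH_spec:
  assumes noeth: "\<forall>I. ideal I R \<longrightarrow> (\<exists>A. finite A \<and> A \<subseteq> carrier R \<and> I = Idl A)"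
    and S: "subm R k S"
  shows "snd (CH k S) \<in> mod_hom R (free_mod R (fst (CH k S))) (free_mod R k) \<and> snd (CH k S) ` carrier (free_mod R (fst (CH k S))) = S"
proof -
  obtain p D where "D \<in> mod_hom R (free_mod R p) (free_mod R k) \<and> D ` carrier (free_mod R p) = S"
    using FG[OF noeth S] by blast
  then show ?thesis unfolding CH_def
    by (rule someI[where P = "\<lambda>pD. snd pD \<in> mod_hom R (free_mod R (fst pD)) (free_mod R k) \<and> snd pD ` carrier (free_mod R (fst pD)) = S" and x = "(p, D)", simplified])
qed

lemma RES:
  assumes noeth: "\<forall>I. ideal I R \<longrightarrow> (\<exists>A. finite A \<and> A \<subseteq> carrier R \<and> I = Idl A)"
    and S0: "subm R k0 S0"
  shows "\<exists>nn d. nn 0 = k0 \<and> (\<forall>i. d (Suc i) \<in> mod_hom R (free_mod R (nn (Suc i))) (free_mod R (nn i))) \<and>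
     d 1 ` carrier (free_mod R (nn 1)) = S0 \<and>
     (\<forall>i. mod_kernel (free_mod R (nn (Suc i))) (free_mod R (nn i)) (d (Suc i))
            = d (Suc (Suc i)) ` carrier (free_mod R (nn (Suc (Suc i)))))"
proof -
  define st where "st = rec_nat (k0, S0) (\<lambda>_ ks. (fst (CH (fst ks) (snd ks)),
      mod_kernel (free_mod R (fst (CH (fst ks) (snd ks)))) (free_mod R (fst ks)) (snd (CH (fst ks) (snd ks)))))"
  have st0: "st 0 = (k0, S0)" by (simp add: st_def)
  have stS: "st (Suc i) = (fst (CH (fst (st i)) (snd (st i))),
      mod_kernel (free_mod R (fst (CH (fst (st i)) (snd (st i))))) (free_mod R (fst (st i))) (snd (CH (fst (st i)) (snd (st i)))))" for i
    by (simp add: st_def)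
  have inv: "subm R (fst (st i)) (snd (st i))" for i
  proof (induction i)
    case 0 then show ?case using S0 st0 by simp
  next
    case (Suc i)
    have "snd (CH (fst (st i)) (snd (st i))) \<in> mod_hom R (free_mod R (fst (CH (fst (st i)) (snd (st i))))) (free_mod R (fst (st i)))"
      using CH_spec[OF noeth Suc] by blast
    then show ?case unfolding stS by (simp add: kernel_subm[OF module_FM])
  qed
  define nn where "nn i = fst (st i)" for i
  define d where "d i = (case i of 0 \<Rightarrow> (\<lambda>x. x) | Suc j \<Rightarrow> snd (CH (fst (st j)) (snd (st j))))" for i
  have spec: "d (Suc i) \<in> mod_hom R (free_mod R (nn (Suc i))) (free_mod R (nn i)) \<and>
     d (Suc i) ` carrier (free_mod R (nn (Suc i))) = snd (st i)" for i
    using CH_spec[OF noeth inv[of i]] by (simp add: d_def nn_def stS)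
  show ?thesis
  proof (intro exI conjI allI)
    show "nn 0 = k0" by (simp add: nn_def st0)
    show "d (Suc i) \<in> mod_hom R (free_mod R (nn (Suc i))) (free_mod R (nn i))" for i using spec by blast
    show "d 1 ` carrier (free_mod R (nn 1)) = S0" using spec[of 0] st0 by simp
    show "mod_kernel (free_mod R (nn (Suc i))) (free_mod R (nn i)) (d (Suc i))
            = d (Suc (Suc i)) ` carrier (free_mod R (nn (Suc (Suc i))))" for i
      using spec[of "Suc i"] by (simp add: stS nn_def d_def)
  qed
qed

end



lemma submod_simps [simp]:
  "carrier (submod M K) = K" "\<zero>\<^bsub>submod M K\<^esub> = \<zero>\<^bsub>M\<^esub>"
  "x \<oplus>\<^bsub>submod M K\<^esub> y = x \<oplus>\<^bsub>M\<^esub> y" "a \<odot>\<^bsub>submod M K\<^esub> x = a \<odot>\<^bsub>M\<^esub> x"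
  by (simp_all add: submod_def)

lemma dsum_simps [simp]:
  "carrier (dsum A B) = carrier A \<times> carrier B" "\<zero>\<^bsub>dsum A B\<^esub> = (\<zero>\<^bsub>A\<^esub>, \<zero>\<^bsub>B\<^esub>)"
  "x \<oplus>\<^bsub>dsum A B\<^esub> y = (fst x \<oplus>\<^bsub>A\<^esub> fst y, snd x \<oplus>\<^bsub>B\<^esub> snd y)"
  "a \<odot>\<^bsub>dsum A B\<^esub> x = (a \<odot>\<^bsub>A\<^esub> fst x, a \<odot>\<^bsub>B\<^esub> snd x)"
  by (simp_all add: dsum_def)

lemma self_mod_simps [simp]:
  "carrier (self_mod R) = carrier R" "\<zero>\<^bsub>self_mod R\<^esub> = \<zero>\<^bsub>R\<^esub>"
  "x \<oplus>\<^bsub>self_mod R\<^esub> y = x \<oplus>\<^bsub>R\<^esub> y" "a \<odot>\<^bsub>self_mod R\<^esub> x = a \<otimes>\<^bsub>R\<^esub> x"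
  by (simp_all add: self_mod_def)

lemma module_dsum:
  assumes A: "module R A" and B: "module R B"
  shows "module R (dsum A B)"
proof -
  interpret A: module R A by fact
  interpret B: module R B by fact
  show ?thesis
  proof (rule moduleI)
    show "cring R" by (rule A.is_cring)
    show "abelian_group (dsum A B)"
    proof (rule abelian_groupI)
      fix x assume x: "x \<in> carrier (dsum A B)"
      show "\<exists>y\<in>carrier (dsum A B). y \<oplus>\<^bsub>dsum A B\<^esub> x = \<zero>\<^bsub>dsum A B\<^esub>"
        by (rule bexI[of _ "(\<ominus>\<^bsub>A\<^esub> fst x, \<ominus>\<^bsub>B\<^esub> snd x)"]) (use x in \<open>auto simp: A.l_neg B.l_neg\<close>)
    qed (auto simp: A.a_ac B.a_ac)
  qed (auto simp: A.smult_l_distr B.smult_l_distr A.smult_r_distr B.smult_r_distr A.smult_assoc1 B.smult_assoc1)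
qed

lemma module_self:
  fixes R :: "'a ring" (structure)
  assumes "cring R" shows "module R (self_mod R)"
proof -
  interpret cring R by fact
  show ?thesis
  proof (rule moduleI)
    show "abelian_group (self_mod R)"
    proof (rule abelian_groupI)
      fix x assume x: "x \<in> carrier (self_mod R)"
      show "\<exists>y\<in>carrier (self_mod R). y \<oplus>\<^bsub>self_mod R\<^esub> x = \<zero>\<^bsub>self_mod R\<^esub>"
        by (rule bexI[of _ "\<ominus> x"]) (use x in \<open>auto simp: l_neg\<close>)
    qed (auto simp: a_ac)
  qed (auto simp: is_cring l_distr r_distr m_assoc)
qed

context cr begin

lemma module_submod:
  assumes S: "subm R k S" shows "module R (submod (free_mod R k) S)"
proof -
  have Sc: "x \<in> S \<Longrightarrow> x \<in> carrier (free_mod R k)" for x using S by (auto simp: subm_def)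
  have xe: "x \<in> S \<Longrightarrow> x i \<in> carrier R" for x i using Sc FM_elem by blast
  show ?thesis
proof (rule moduleI)
  show "cring R" by (rule is_cring)
  show "abelian_group (submod (free_mod R k) S)"
  proof (rule abelian_groupI)
    fix x assume x: "x \<in> carrier (submod (free_mod R k) S)"
    have "(\<lambda>i. (\<ominus> \<one>) \<otimes> x i) \<in> S" using S x by (simp add: subm_def)
    moreover have "(\<lambda>i. (\<ominus> \<one>) \<otimes> x i \<oplus> x i) = (\<lambda>i. \<zero>)"
    proof
      fix i have "x \<in> S" using x by simp
      then have "x i \<in> carrier R" using Sc FM_elem by blast
      then show "(\<ominus> \<one>) \<otimes> x i \<oplus> x i = \<zero>" by algebra
    qed
    ultimately show "\<exists>y\<in>carrier (submod (free_mod R k) S). y \<oplus>\<^bsub>submod (free_mod R k) S\<^esub> x = \<zero>\<^bsub>submod (free_mod R k) S\<^esub>"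
      by (intro bexI[of _ "\<lambda>i. (\<ominus> \<one>) \<otimes> x i"]) auto
  qed (use S in \<open>auto simp: subm_def xe a_ac intro!: ext\<close>)
qed (use S xe in \<open>auto simp: subm_def xe l_distr r_distr m_assoc intro!: ext\<close>)
qed

end

lemma hom_pair:
  "f1 \<in> mod_hom R A B \<Longrightarrow> f2 \<in> mod_hom R A C \<Longrightarrow> (\<lambda>x. (f1 x, f2 x)) \<in> mod_hom R A (dsum B C)"
  unfolding mod_hom_def by auto

lemma hom_into_sub:
  "f \<in> mod_hom R A M \<Longrightarrow> (\<And>x. x \<in> carrier A \<Longrightarrow> f x \<in> K) \<Longrightarrow> f \<in> mod_hom R A (submod M K)"
  unfolding mod_hom_def by auto

lemma hom_addB:
  assumes B: "module R B" and f1: "f1 \<in> mod_hom R A B" and f2: "f2 \<in> mod_hom R A B"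
  shows "(\<lambda>x. f1 x \<oplus>\<^bsub>B\<^esub> f2 x) \<in> mod_hom R A B"
proof -
  interpret B: module R B by fact
  show ?thesis
  proof (rule mod_homI)
    fix x assume "x \<in> carrier A" then show "f1 x \<oplus>\<^bsub>B\<^esub> f2 x \<in> carrier B"
      using mod_homD(1)[OF f1] mod_homD(1)[OF f2] by simp
  next
    fix x y assume x: "x \<in> carrier A" and y: "y \<in> carrier A"
    have c: "f1 x \<in> carrier B" "f1 y \<in> carrier B" "f2 x \<in> carrier B" "f2 y \<in> carrier B"
      using mod_homD(1)[OF f1] mod_homD(1)[OF f2] x y by auto
    show "f1 (x \<oplus>\<^bsub>A\<^esub> y) \<oplus>\<^bsub>B\<^esub> f2 (x \<oplus>\<^bsub>A\<^esub> y) = f1 x \<oplus>\<^bsub>B\<^esub> f2 x \<oplus>\<^bsub>B\<^esub> (f1 y \<oplus>\<^bsub>B\<^esub> f2 y)"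
      using mod_homD(2)[OF f1 x y] mod_homD(2)[OF f2 x y] c by (simp add: B.a_ac)
  next
    fix a x assume a: "a \<in> carrier R" and x: "x \<in> carrier A"
    show "f1 (a \<odot>\<^bsub>A\<^esub> x) \<oplus>\<^bsub>B\<^esub> f2 (a \<odot>\<^bsub>A\<^esub> x) = a \<odot>\<^bsub>B\<^esub> (f1 x \<oplus>\<^bsub>B\<^esub> f2 x)"
      using mod_homD(3)[OF f1 a x] mod_homD(3)[OF f2 a x] mod_homD(1)[OF f1 x] mod_homD(1)[OF f2 x] a
      by (simp add: B.smult_r_distr)
  qed
qed



context cr begin

lemma stable_sub_AR:
  assumes X: "module R X" shows "stable_ann R X \<subseteq> AR_ann R X"
proof
  fix r assume r: "r \<in> stable_ann R X"
  have rc: "r \<in> carrier R" using r by (simp add: stable_ann_def)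
  have N: "module R (dsum X (self_mod R))" by (rule module_dsum[OF X module_self[OF is_cring]])
  have "r \<in> ext_ann R X (dsum X (self_mod R)) i" if i: "0 < i" for i
    unfolding ext_ann_def
  proof (intro CollectI conjI rc allI impI ballI)
    fix nn \<epsilon> d f
    assume res: "free_resolution R X nn \<epsilon> d" and f: "f \<in> mod_hom R (free_mod R (nn i)) (dsum X (self_mod R))"
      and cyc: "\<forall>y\<in>carrier (free_mod R (nn (Suc i))). f (d (Suc i) y) = \<zero>\<^bsub>dsum X (self_mod R)\<^esub>"
    show "if i = 0 then \<forall>x\<in>carrier (free_mod R (nn i)). r \<odot>\<^bsub>dsum X (self_mod R)\<^esub> f x = \<zero>\<^bsub>dsum X (self_mod R)\<^esub>
          else \<exists>g\<in>mod_hom R (free_mod R (nn (i - 1))) (dsum X (self_mod R)).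
                 \<forall>x\<in>carrier (free_mod R (nn i)). r \<odot>\<^bsub>dsum X (self_mod R)\<^esub> f x = g (d i x)"
      using stable_sub_ext[OF X N r res i f cyc] i by simp
  qed
  then show "r \<in> AR_ann R X" using rc by (simp add: AR_ann_def)
qed

end


context cr begin

lemma AR_sub_stable:
  assumes noeth: "\<forall>I. ideal I R \<longrightarrow> (\<exists>A. finite A \<and> A \<subseteq> carrier R \<and> I = Idl A)"
    and M: "module R M" and \<pi>: "\<pi> \<in> mod_hom R (free_mod R n) M"
    and surj: "\<pi> ` carrier (free_mod R n) = carrier M"
    and K_def: "K = mod_kernel (free_mod R n) M \<pi>"
    and X_def: "X = dsum M (submod (free_mod R n) K)"
  shows "AR_ann R X \<subseteq> stable_ann R X"
proof
  fix r assume r: "r \<in> AR_ann R X"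
  have rc: "r \<in> carrier R" using r by (simp add: AR_ann_def)
  interpret Mm: module R M by fact
  have Ksub: "subm R n K" unfolding K_def by (rule kernel_subm[OF M \<pi>])
  have KM: "module R (submod (free_mod R n) K)" by (rule module_submod[OF Ksub])
  have Xm: "module R X" unfolding X_def by (rule module_dsum[OF M KM])
  interpret Xi: module R X by fact
  have Nm: "module R (dsum X (self_mod R))" by (rule module_dsum[OF Xm module_self[OF is_cring]])
  have Xs: "carrier X = carrier M \<times> K" "\<zero>\<^bsub>X\<^esub> = (\<zero>\<^bsub>M\<^esub>, (\<lambda>i. \<zero>))"
    "x \<oplus>\<^bsub>X\<^esub> y = (fst x \<oplus>\<^bsub>M\<^esub> fst y, (\<lambda>i. snd x i \<oplus> snd y i))"
    "a \<odot>\<^bsub>X\<^esub> x = (a \<odot>\<^bsub>M\<^esub> fst x, (\<lambda>i. a \<otimes> snd x i))" for x y a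
    by (simp_all add: X_def)
  have Kc: "u \<in> K \<Longrightarrow> u \<in> carrier (free_mod R n) \<and> \<pi> u = \<zero>\<^bsub>M\<^esub>" for u
    by (simp add: K_def mod_kernel_def)
  obtain m \<kappa> where \<kappa>: "\<kappa> \<in> mod_hom R (free_mod R m) (free_mod R n)" and \<kappa>i: "\<kappa> ` carrier (free_mod R m) = K"
    using FG[OF noeth Ksub] by blast
  define \<epsilon> where "\<epsilon> = (\<lambda>w. (\<pi> (lo R n w), \<kappa> (hi n w)))"
  have \<epsilon>h: "\<epsilon> \<in> mod_hom R (free_mod R (n + m)) X"
    unfolding X_def \<epsilon>_def
  proof (rule hom_pair)
    show "(\<lambda>w. \<pi> (lo R n w)) \<in> mod_hom R (free_mod R (n + m)) M" by (rule mod_hom_comp[OF lo_hom \<pi>])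
    show "(\<lambda>w. \<kappa> (hi n w)) \<in> mod_hom R (free_mod R (n + m)) (submod (free_mod R n) K)"
    proof (rule hom_into_sub[OF mod_hom_comp[OF hi_hom \<kappa>]])
      fix w assume "w \<in> carrier (free_mod R (n + m))"
      then have "hi n w \<in> carrier (free_mod R m)" by (rule hi_closed)
      then have "\<kappa> (hi n w) \<in> \<kappa> ` carrier (free_mod R m)" by (rule imageI)
      then show "\<kappa> (hi n w) \<in> K" using \<kappa>i by simp
    qed
  qed
  have \<epsilon>s: "\<epsilon> ` carrier (free_mod R (n + m)) = carrier X"
  proof
    show "\<epsilon> ` carrier (free_mod R (n + m)) \<subseteq> carrier X"
    proof (rule image_subsetI)
      fix w assume "w \<in> carrier (free_mod R (n + m))" then show "\<epsilon> w \<in> carrier X" by (rule mod_homD(1)[OF \<epsilon>h])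
    qed
    show "carrier X \<subseteq> \<epsilon> ` carrier (free_mod R (n + m))"
    proof
      fix z assume "z \<in> carrier X"
      then obtain x k where z: "z = (x, k)" "x \<in> carrier M" "k \<in> K" by (cases z) (simp add: Xs)
      obtain u where u: "u \<in> carrier (free_mod R n)" "\<pi> u = x" using surj z(2) by (metis imageE)
      obtain v where v: "v \<in> carrier (free_mod R m)" "\<kappa> v = k" using \<kappa>i z(3) by (metis imageE)
      have "\<epsilon> (join n u v) = z" using u v z by (simp add: \<epsilon>_def lo_join hi_join)
      then show "z \<in> \<epsilon> ` carrier (free_mod R (n + m))" using join_closed[OF u(1) v(1)] by (metis image_eqI)
    qed
  qed
  define S0 where "S0 = mod_kernel (free_mod R (n + m)) X \<epsilon>"
  have S0s: "subm R (n + m) S0" unfolding S0_def by (rule kernel_subm[OF Xm \<epsilon>h])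
  have S0c: "w \<in> S0 \<longleftrightarrow> w \<in> carrier (free_mod R (n + m)) \<and> \<pi> (lo R n w) = \<zero>\<^bsub>M\<^esub> \<and> \<kappa> (hi n w) = (\<lambda>i. \<zero>)" for w
    by (auto simp: S0_def mod_kernel_def \<epsilon>_def Xs)
  obtain nn d where nn0: "nn 0 = n + m"
    and dh: "\<And>i. d (Suc i) \<in> mod_hom R (free_mod R (nn (Suc i))) (free_mod R (nn i))"
    and d1: "d 1 ` carrier (free_mod R (nn 1)) = S0"
    and dk: "\<And>i. mod_kernel (free_mod R (nn (Suc i))) (free_mod R (nn i)) (d (Suc i))
            = d (Suc (Suc i)) ` carrier (free_mod R (nn (Suc (Suc i))))"
    using RES[OF noeth S0s] by blast
  have res: "free_resolution R X nn \<epsilon> d"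
    unfolding free_resolution_def using \<epsilon>h \<epsilon>s dh d1 dk nn0 by (simp add: S0_def)
  have ext1: "r \<in> ext_ann R X (dsum X (self_mod R)) 1" using r by (simp add: AR_ann_def)
  have E1: "\<exists>g\<in>mod_hom R (free_mod R (nn 0)) (dsum X (self_mod R)).
       \<forall>x\<in>carrier (free_mod R (nn 1)). r \<odot>\<^bsub>dsum X (self_mod R)\<^esub> f x = g (d 1 x)"
    if f: "f \<in> mod_hom R (free_mod R (nn 1)) (dsum X (self_mod R))"
      and cyc: "\<forall>y\<in>carrier (free_mod R (nn (Suc 1))). f (d (Suc 1) y) = \<zero>\<^bsub>dsum X (self_mod R)\<^esub>" for f
  proof -
    have "\<forall>n \<epsilon> d. free_resolution R X n \<epsilon> d \<longrightarrow>
     (\<forall>f \<in> mod_hom R (free_mod R (n 1)) (dsum X (self_mod R)).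
        (\<forall>y\<in>carrier (free_mod R (n (Suc 1))). f (d (Suc 1) y) = \<zero>\<^bsub>dsum X (self_mod R)\<^esub>) \<longrightarrow>
        (if (1::nat) = 0 then (\<forall>x\<in>carrier (free_mod R (n 1)). r \<odot>\<^bsub>dsum X (self_mod R)\<^esub> f x = \<zero>\<^bsub>dsum X (self_mod R)\<^esub>)
         else (\<exists>g \<in> mod_hom R (free_mod R (n (1 - 1))) (dsum X (self_mod R)).
                 \<forall>x\<in>carrier (free_mod R (n 1)). r \<odot>\<^bsub>dsum X (self_mod R)\<^esub> f x = g (d 1 x))))"
      using ext1 unfolding ext_ann_def mem_Collect_eq by (rule conjunct2)
    from this[rule_format, OF res f, OF bspec[OF cyc]] have "(if (1::nat) = 0 then (\<forall>x\<in>carrier (free_mod R (nn 1)). r \<odot>\<^bsub>dsum X (self_mod R)\<^esub> f x = \<zero>\<^bsub>dsum X (self_mod R)\<^esub>)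
         else (\<exists>g \<in> mod_hom R (free_mod R (nn (1 - 1))) (dsum X (self_mod R)).
                 \<forall>x\<in>carrier (free_mod R (nn 1)). r \<odot>\<^bsub>dsum X (self_mod R)\<^esub> f x = g (d 1 x)))"
      .
    then show ?thesis by simp
  qed

  have dh1: "d 1 \<in> mod_hom R (free_mod R (nn 1)) (free_mod R (n + m))" using dh[of 0] nn0 by simp
  have d1S0: "y \<in> carrier (free_mod R (nn 1)) \<Longrightarrow> d 1 y \<in> S0" for y using d1 by blast
  have loid: "u \<in> carrier (free_mod R n) \<Longrightarrow> lo R n u = u" for u
    by (auto simp: lo_def FM_carrier)
  have Kin: "u \<in> S0" if u: "u \<in> K" for u
  proof -
    have uc: "u \<in> carrier (free_mod R n)" "\<pi> u = \<zero>\<^bsub>M\<^esub>" using Kc[OF u] by auto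
    have "hi n u = (\<lambda>i. \<zero>)" using uc by (auto simp: hi_def FM_carrier)
    moreover have "\<kappa> (\<lambda>i. \<zero>) = (\<lambda>i. \<zero>)" using hom_FM_zero[OF module_FM \<kappa>] by simp
    moreover have "u \<in> carrier (free_mod R (n + m))" using FM_mono[OF uc(1)] by simp
    ultimately show ?thesis using uc loid[OF uc(1)] by (simp add: S0c)
  qed
  have Kimg: "\<exists>y\<in>carrier (free_mod R (nn 1)). d 1 y = u" if "u \<in> K" for u
    using Kin[OF that] d1 by (metis imageE)
  have loK: "lo R n w \<in> K" if "w \<in> S0" for w
    using that lo_closed[of w n m] by (simp add: S0c K_def mod_kernel_def)
  have lo_add: "lo R n (\<lambda>i. x i \<oplus> y i) = (\<lambda>i. lo R n x i \<oplus> lo R n y i)" for x y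
    by (auto simp: lo_def)
  have lo_smult: "a \<in> carrier R \<Longrightarrow> lo R n (\<lambda>i. a \<otimes> x i) = (\<lambda>i. a \<otimes> lo R n x i)" for a x
    by (auto simp: lo_def)
  have lo_zero: "lo R n (\<lambda>i. \<zero>) = (\<lambda>i. \<zero>)" by (auto simp: lo_def)
  have Nc: "carrier (dsum X (self_mod R)) = (carrier M \<times> K) \<times> carrier R" by (simp add: Xs)
  have GEN: "\<exists>g\<in>mod_hom R (free_mod R (n + m)) (dsum X (self_mod R)). \<forall>u\<in>K. g u = r \<odot>\<^bsub>dsum X (self_mod R)\<^esub> \<psi> u"
    if a: "\<And>w. w \<in> S0 \<Longrightarrow> \<psi> w \<in> carrier (dsum X (self_mod R))"
      and b: "\<And>x y. x \<in> S0 \<Longrightarrow> y \<in> S0 \<Longrightarrow> \<psi> (\<lambda>i. x i \<oplus> y i) = \<psi> x \<oplus>\<^bsub>dsum X (self_mod R)\<^esub> \<psi> y"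
      and c: "\<And>a x. a \<in> carrier R \<Longrightarrow> x \<in> S0 \<Longrightarrow> \<psi> (\<lambda>i. a \<otimes> x i) = a \<odot>\<^bsub>dsum X (self_mod R)\<^esub> \<psi> x"
      and z: "\<psi> (\<lambda>i. \<zero>) = \<zero>\<^bsub>dsum X (self_mod R)\<^esub>" for \<psi>
  proof -
    have fh: "(\<lambda>y. \<psi> (d 1 y)) \<in> mod_hom R (free_mod R (nn 1)) (dsum X (self_mod R))"
    proof (rule mod_homI)
      fix y assume "y \<in> carrier (free_mod R (nn 1))" then show "\<psi> (d 1 y) \<in> carrier (dsum X (self_mod R))"
        using a d1S0 by blast
    next
      fix x y assume x: "x \<in> carrier (free_mod R (nn 1))" and y: "y \<in> carrier (free_mod R (nn 1))"
      have "d 1 (x \<oplus>\<^bsub>free_mod R (nn 1)\<^esub> y) = (\<lambda>i. d 1 x i \<oplus> d 1 y i)"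
        using mod_homD(2)[OF dh1 x y] by simp
      then show "\<psi> (d 1 (x \<oplus>\<^bsub>free_mod R (nn 1)\<^esub> y)) = \<psi> (d 1 x) \<oplus>\<^bsub>dsum X (self_mod R)\<^esub> \<psi> (d 1 y)"
        using b[OF d1S0[OF x] d1S0[OF y]] by simp
    next
      fix a x assume a: "a \<in> carrier R" and x: "x \<in> carrier (free_mod R (nn 1))"
      have "d 1 (a \<odot>\<^bsub>free_mod R (nn 1)\<^esub> x) = (\<lambda>i. a \<otimes> d 1 x i)"
        using mod_homD(3)[OF dh1 a x] by simp
      then show "\<psi> (d 1 (a \<odot>\<^bsub>free_mod R (nn 1)\<^esub> x)) = a \<odot>\<^bsub>dsum X (self_mod R)\<^esub> \<psi> (d 1 x)"
        using c[OF a d1S0[OF x]] by simp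
    qed
    have cyc: "\<forall>y\<in>carrier (free_mod R (nn (Suc 1))). \<psi> (d 1 (d (Suc 1) y)) = \<zero>\<^bsub>dsum X (self_mod R)\<^esub>"
    proof
      fix y assume "y \<in> carrier (free_mod R (nn (Suc 1)))"
      then have "d (Suc 0) (d (Suc (Suc 0)) y) = (\<lambda>i. \<zero>)" using res_dd[OF res, of y 0] by simp
      then show "\<psi> (d 1 (d (Suc 1) y)) = \<zero>\<^bsub>dsum X (self_mod R)\<^esub>" using z by simp
    qed
    obtain g where g: "g \<in> mod_hom R (free_mod R (nn 0)) (dsum X (self_mod R))"
      and gr: "\<forall>x\<in>carrier (free_mod R (nn 1)). r \<odot>\<^bsub>dsum X (self_mod R)\<^esub> \<psi> (d 1 x) = g (d 1 x)"
      using E1[OF fh cyc] by blast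
    show ?thesis
    proof (intro bexI ballI)
      show "g \<in> mod_hom R (free_mod R (n + m)) (dsum X (self_mod R))" using g nn0 by simp
      fix u assume "u \<in> K"
      then obtain y where "y \<in> carrier (free_mod R (nn 1))" "d 1 y = u" using Kimg by blast
      then show "g u = r \<odot>\<^bsub>dsum X (self_mod R)\<^esub> \<psi> u" using gr by metis
    qed
  qed

  have Kc': "u \<in> K \<Longrightarrow> u i \<in> carrier R" for u i using Kc FM_elem by blast
  define \<psi>a where "\<psi>a w = ((\<zero>\<^bsub>M\<^esub>, lo R n w), \<zero>)" for w
  obtain ga where ga: "ga \<in> mod_hom R (free_mod R (n + m)) (dsum X (self_mod R))"
    and gaK: "\<forall>u\<in>K. ga u = r \<odot>\<^bsub>dsum X (self_mod R)\<^esub> \<psi>a u"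
  proof -
    have "\<exists>g\<in>mod_hom R (free_mod R (n + m)) (dsum X (self_mod R)). \<forall>u\<in>K. g u = r \<odot>\<^bsub>dsum X (self_mod R)\<^esub> \<psi>a u"
    proof (rule GEN)
      fix w assume "w \<in> S0" then show "\<psi>a w \<in> carrier (dsum X (self_mod R))"
        using loK by (simp add: \<psi>a_def Xs)
    next
      fix x y assume "x \<in> S0" "y \<in> S0"
      then show "\<psi>a (\<lambda>i. x i \<oplus> y i) = \<psi>a x \<oplus>\<^bsub>dsum X (self_mod R)\<^esub> \<psi>a y"
        by (simp add: \<psi>a_def Xs lo_add)
    next
      fix a x assume "a \<in> carrier R" "x \<in> S0"
      then show "\<psi>a (\<lambda>i. a \<otimes> x i) = a \<odot>\<^bsub>dsum X (self_mod R)\<^esub> \<psi>a x"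
        by (simp add: \<psi>a_def Xs lo_smult)
    next
      show "\<psi>a (\<lambda>i. \<zero>) = \<zero>\<^bsub>dsum X (self_mod R)\<^esub>" by (simp add: \<psi>a_def Xs lo_zero)
    qed
    then show ?thesis using that by blast
  qed
  define t where "t u = snd (fst (ga u))" for u
  have FMnm: "u \<in> carrier (free_mod R n) \<Longrightarrow> u \<in> carrier (free_mod R (n + m))" for u
    using FM_mono by simp
  have tK: "t u \<in> K" if "u \<in> carrier (free_mod R n)" for u
    using mod_homD(1)[OF ga FMnm[OF that]] by (auto simp: t_def Xs)
  have th: "t \<in> mod_hom R (free_mod R n) (free_mod R n)"
  proof (rule mod_homI)
    fix u assume "u \<in> carrier (free_mod R n)" then show "t u \<in> carrier (free_mod R n)" using tK Kc by blast
  next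
    fix u v assume "u \<in> carrier (free_mod R n)" "v \<in> carrier (free_mod R n)"
    then show "t (u \<oplus>\<^bsub>free_mod R n\<^esub> v) = t u \<oplus>\<^bsub>free_mod R n\<^esub> t v"
      using mod_homD(2)[OF ga FMnm FMnm] by (simp add: t_def Xs)
  next
    fix a u assume "a \<in> carrier R" "u \<in> carrier (free_mod R n)"
    then show "t (a \<odot>\<^bsub>free_mod R n\<^esub> u) = a \<odot>\<^bsub>free_mod R n\<^esub> t u"
      using mod_homD(3)[OF ga _ FMnm] by (simp add: t_def Xs)
  qed
  have tr: "t u = (\<lambda>i. r \<otimes> u i)" if u: "u \<in> K" for u
    using gaK u Kc[OF u] loid rc by (simp add: t_def \<psi>a_def Xs)

  have Mz: "\<zero>\<^bsub>M\<^esub> \<in> carrier M" by simp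
  define pre where "pre x = (SOME u. u \<in> carrier (free_mod R n) \<and> \<pi> u = x)" for x
  have pre: "pre x \<in> carrier (free_mod R n) \<and> \<pi> (pre x) = x" if "x \<in> carrier M" for x
  proof -
    have "x \<in> \<pi> ` carrier (free_mod R n)" using surj that by simp
    then obtain u where "u \<in> carrier (free_mod R n)" "\<pi> u = x" by (rule imageE) simp
    then have "u \<in> carrier (free_mod R n) \<and> \<pi> u = x" by blast
    then show ?thesis unfolding pre_def by (rule someI[where P = "\<lambda>u. u \<in> carrier (free_mod R n) \<and> \<pi> u = x"])
  qed
  define sf where "sf u = (\<lambda>i. r \<otimes> u i \<oplus> (\<ominus> \<one>) \<otimes> t u i)" for u
  define s where "s x = sf (pre x)" for x
  have sfc: "u \<in> carrier (free_mod R n) \<Longrightarrow> sf u \<in> carrier (free_mod R n)" for u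
    unfolding sf_def using rc mod_homD(1)[OF th] by simp
  have sfel: "u \<in> carrier (free_mod R n) \<Longrightarrow> t u i \<in> carrier R" for u i
    by (rule FM_elem[OF mod_homD(1)[OF th]])
  have s\<pi>: "s (\<pi> u) = sf u" if u: "u \<in> carrier (free_mod R n)" for u
  proof -
    define u' where "u' = pre (\<pi> u)"
    have u': "u' \<in> carrier (free_mod R n)" "\<pi> u' = \<pi> u" using pre[OF mod_homD(1)[OF \<pi> u]] by (auto simp: u'_def)
    define \<delta> where "\<delta> = (\<lambda>i. u' i \<oplus> (\<ominus> \<one>) \<otimes> u i)"
    have mu: "(\<lambda>i. (\<ominus> \<one>) \<otimes> u i) \<in> carrier (free_mod R n)" using u by simp
    have \<delta>c: "\<delta> \<in> carrier (free_mod R n)" using u u' by (simp add: \<delta>_def)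
    have "\<pi> \<delta> = \<pi> u' \<oplus>\<^bsub>M\<^esub> (\<ominus> \<one>) \<odot>\<^bsub>M\<^esub> \<pi> u"
      unfolding \<delta>_def using hom_FM_add[OF \<pi> u'(1) mu] hom_FM_smult[OF \<pi> _ u, of "\<ominus> \<one>"] by simp
    also have "\<dots> = \<zero>\<^bsub>M\<^esub>" using u'(2) mod_homD(1)[OF \<pi> u] by (simp add: Mm.smult_l_minus Mm.r_neg)
    finally have "\<delta> \<in> K" using \<delta>c by (simp add: K_def mod_kernel_def)
    then have t\<delta>: "t \<delta> = (\<lambda>i. r \<otimes> \<delta> i)" by (rule tr)
    have "t \<delta> = (\<lambda>i. t u' i \<oplus> (\<ominus> \<one>) \<otimes> t u i)"
      unfolding \<delta>_def using hom_FM_add[OF th u'(1) mu] hom_FM_smult[OF th _ u, of "\<ominus> \<one>"] by simp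
    then have eq: "t u' i \<oplus> (\<ominus> \<one>) \<otimes> t u i = r \<otimes> (u' i \<oplus> (\<ominus> \<one>) \<otimes> u i)" for i
      using t\<delta> by (metis \<delta>_def)
    show ?thesis
    proof
      fix i
      have c: "u i \<in> carrier R" "u' i \<in> carrier R" "t u i \<in> carrier R" "t u' i \<in> carrier R"
        by (simp_all add: FM_elem[OF u] FM_elem[OF u'(1)] sfel[OF u] sfel[OF u'(1)])
      have "t u' i = (t u' i \<oplus> (\<ominus> \<one>) \<otimes> t u i) \<oplus> t u i" using c by algebra
      also have "\<dots> = r \<otimes> (u' i \<oplus> (\<ominus> \<one>) \<otimes> u i) \<oplus> t u i" using eq by simp
      finally have e2: "t u' i = r \<otimes> (u' i \<oplus> (\<ominus> \<one>) \<otimes> u i) \<oplus> t u i" .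
      show "s (\<pi> u) i = sf u i"
        unfolding s_def u'_def[symmetric] sf_def using c rc e2 by simp algebra
    qed
  qed
  have sh: "s \<in> mod_hom R M (free_mod R n)"
  proof (rule mod_homI)
    fix x assume "x \<in> carrier M" then show "s x \<in> carrier (free_mod R n)" using pre sfc by (simp add: s_def)
  next
    fix x y assume x: "x \<in> carrier M" and y: "y \<in> carrier M"
    define u v where "u = pre x" and "v = pre y"
    have uv: "u \<in> carrier (free_mod R n)" "v \<in> carrier (free_mod R n)" "\<pi> u = x" "\<pi> v = y"
      using pre x y by (auto simp: u_def v_def)
    have "x \<oplus>\<^bsub>M\<^esub> y = \<pi> (\<lambda>i. u i \<oplus> v i)" using hom_FM_add[OF \<pi> uv(1,2)] uv by simp
    then have "s (x \<oplus>\<^bsub>M\<^esub> y) = sf (\<lambda>i. u i \<oplus> v i)" using s\<pi> uv by simp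
    also have "\<dots> = (\<lambda>i. sf u i \<oplus> sf v i)"
    proof
      fix i
      have c: "u i \<in> carrier R" "v i \<in> carrier R" "t u i \<in> carrier R" "t v i \<in> carrier R"
        by (simp_all add: FM_elem[OF uv(1)] FM_elem[OF uv(2)] sfel[OF uv(1)] sfel[OF uv(2)])
      have "t (\<lambda>i. u i \<oplus> v i) = (\<lambda>i. t u i \<oplus> t v i)" using hom_FM_add[OF th uv(1,2)] by simp
      then show "sf (\<lambda>i. u i \<oplus> v i) i = sf u i \<oplus> sf v i" unfolding sf_def using c rc by simp algebra
    qed
    finally show "s (x \<oplus>\<^bsub>M\<^esub> y) = s x \<oplus>\<^bsub>free_mod R n\<^esub> s y" using uv s\<pi> by auto
  next
    fix a x assume a: "a \<in> carrier R" and x: "x \<in> carrier M"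
    define u where "u = pre x"
    have uv: "u \<in> carrier (free_mod R n)" "\<pi> u = x" using pre x by (auto simp: u_def)
    have "a \<odot>\<^bsub>M\<^esub> x = \<pi> (\<lambda>i. a \<otimes> u i)" using hom_FM_smult[OF \<pi> a uv(1)] uv by simp
    then have "s (a \<odot>\<^bsub>M\<^esub> x) = sf (\<lambda>i. a \<otimes> u i)" using s\<pi> uv a by simp
    also have "\<dots> = (\<lambda>i. a \<otimes> sf u i)"
    proof
      fix i
      have c: "u i \<in> carrier R" "t u i \<in> carrier R"
        by (simp_all add: FM_elem[OF uv(1)] sfel[OF uv(1)])
      have "t (\<lambda>i. a \<otimes> u i) = (\<lambda>i. a \<otimes> t u i)" using hom_FM_smult[OF th a uv(1)] by simp
      then show "sf (\<lambda>i. a \<otimes> u i) i = a \<otimes> sf u i" unfolding sf_def using c rc a by simp algebra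
    qed
    finally show "s (a \<odot>\<^bsub>M\<^esub> x) = a \<odot>\<^bsub>free_mod R n\<^esub> s x" using uv s\<pi> by auto
  qed
  have \<pi>s: "\<pi> (s x) = r \<odot>\<^bsub>M\<^esub> x" if x: "x \<in> carrier M" for x
  proof -
    define u where "u = pre x"
    have uv: "u \<in> carrier (free_mod R n)" "\<pi> u = x" using pre x by (auto simp: u_def)
    have tu: "t u \<in> carrier (free_mod R n)" "\<pi> (t u) = \<zero>\<^bsub>M\<^esub>" using tK[OF uv(1)] Kc by auto
    have "\<pi> (s x) = \<pi> (\<lambda>i. r \<otimes> u i) \<oplus>\<^bsub>M\<^esub> \<pi> (\<lambda>i. (\<ominus> \<one>) \<otimes> t u i)"
      unfolding s_def u_def[symmetric] sf_def using hom_FM_add[OF \<pi>] uv tu rc by simp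
    also have "\<dots> = r \<odot>\<^bsub>M\<^esub> x"
      using hom_FM_smult[OF \<pi> rc uv(1)] hom_FM_smult[OF \<pi> _ tu(1), of "\<ominus> \<one>"] uv tu rc x by simp
    finally show ?thesis .
  qed

  show "r \<in> stable_ann R X"
    unfolding stable_ann_def mem_Collect_eq
  proof (rule conjI[OF rc], rule ballI)
    fix \<phi> assume \<phi>: "\<phi> \<in> mod_hom R X X"
    have \<phi>z: "\<phi> (\<zero>\<^bsub>M\<^esub>, (\<lambda>i. \<zero>)) = (\<zero>\<^bsub>M\<^esub>, (\<lambda>i. \<zero>))" using mod_hom_zero[OF Xm Xm \<phi>] by (simp add: Xs)
    define \<psi>b where "\<psi>b w = (\<phi> (\<zero>\<^bsub>M\<^esub>, lo R n w), \<zero>)" for w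
    obtain gb where gb: "gb \<in> mod_hom R (free_mod R (n + m)) (dsum X (self_mod R))"
      and gbK: "\<forall>u\<in>K. gb u = r \<odot>\<^bsub>dsum X (self_mod R)\<^esub> \<psi>b u"
    proof -
      have "\<exists>g\<in>mod_hom R (free_mod R (n + m)) (dsum X (self_mod R)). \<forall>u\<in>K. g u = r \<odot>\<^bsub>dsum X (self_mod R)\<^esub> \<psi>b u"
      proof (rule GEN)
        fix w assume "w \<in> S0" then show "\<psi>b w \<in> carrier (dsum X (self_mod R))"
          using loK mod_homD(1)[OF \<phi>, of "(\<zero>\<^bsub>M\<^esub>, lo R n w)"] by (simp add: \<psi>b_def Xs)
      next
        fix x y assume x: "x \<in> S0" and y: "y \<in> S0"
        have c: "(\<zero>\<^bsub>M\<^esub>, lo R n x) \<in> carrier X" "(\<zero>\<^bsub>M\<^esub>, lo R n y) \<in> carrier X" using loK x y by (simp_all add: Xs)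
        have "(\<zero>\<^bsub>M\<^esub>, lo R n (\<lambda>i. x i \<oplus> y i)) = (\<zero>\<^bsub>M\<^esub>, lo R n x) \<oplus>\<^bsub>X\<^esub> (\<zero>\<^bsub>M\<^esub>, lo R n y)"
          by (simp add: Xs lo_add)
        then have "\<phi> (\<zero>\<^bsub>M\<^esub>, lo R n (\<lambda>i. x i \<oplus> y i)) = \<phi> (\<zero>\<^bsub>M\<^esub>, lo R n x) \<oplus>\<^bsub>X\<^esub> \<phi> (\<zero>\<^bsub>M\<^esub>, lo R n y)"
          using mod_homD(2)[OF \<phi> c] by simp
        then show "\<psi>b (\<lambda>i. x i \<oplus> y i) = \<psi>b x \<oplus>\<^bsub>dsum X (self_mod R)\<^esub> \<psi>b y"
          by (simp add: \<psi>b_def)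
      next
        fix a x assume a: "a \<in> carrier R" and x: "x \<in> S0"
        have c: "(\<zero>\<^bsub>M\<^esub>, lo R n x) \<in> carrier X" using loK x by (simp add: Xs)
        have "(\<zero>\<^bsub>M\<^esub>, lo R n (\<lambda>i. a \<otimes> x i)) = a \<odot>\<^bsub>X\<^esub> (\<zero>\<^bsub>M\<^esub>, lo R n x)"
          using a by (simp add: Xs lo_smult)
        then have "\<phi> (\<zero>\<^bsub>M\<^esub>, lo R n (\<lambda>i. a \<otimes> x i)) = a \<odot>\<^bsub>X\<^esub> \<phi> (\<zero>\<^bsub>M\<^esub>, lo R n x)"
          using mod_homD(3)[OF \<phi> a c] by simp
        then show "\<psi>b (\<lambda>i. a \<otimes> x i) = a \<odot>\<^bsub>dsum X (self_mod R)\<^esub> \<psi>b x"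
          using a by (simp add: \<psi>b_def)
      next
        show "\<psi>b (\<lambda>i. \<zero>) = \<zero>\<^bsub>dsum X (self_mod R)\<^esub>" using \<phi>z by (simp add: \<psi>b_def lo_zero Xs)
      qed
      then show ?thesis using that by blast
    qed
    define G1 where "G1 u = fst (gb u)" for u
    have G1h: "G1 \<in> mod_hom R (free_mod R n) X"
    proof (rule mod_homI)
      fix u assume u: "u \<in> carrier (free_mod R n)"
      have "gb u \<in> carrier X \<times> carrier R" using mod_homD(1)[OF gb FMnm[OF u]] by simp
      then show "G1 u \<in> carrier X" unfolding G1_def by (simp add: mem_Times_iff)
    next
      fix u v assume "u \<in> carrier (free_mod R n)" "v \<in> carrier (free_mod R n)"
      then show "G1 (u \<oplus>\<^bsub>free_mod R n\<^esub> v) = G1 u \<oplus>\<^bsub>X\<^esub> G1 v"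
        using mod_homD(2)[OF gb FMnm FMnm] by (simp add: G1_def)
    next
      fix a u assume "a \<in> carrier R" "u \<in> carrier (free_mod R n)"
      then show "G1 (a \<odot>\<^bsub>free_mod R n\<^esub> u) = a \<odot>\<^bsub>X\<^esub> G1 u"
        using mod_homD(3)[OF gb _ FMnm] by (simp add: G1_def)
    qed
    have G1K: "G1 u = r \<odot>\<^bsub>X\<^esub> \<phi> (\<zero>\<^bsub>M\<^esub>, u)" if "u \<in> K" for u
      using gbK that Kc[OF that] loid by (simp add: G1_def \<psi>b_def)
    define gg where "gg z = join n (s (fst z)) (snd z)" for z
    define hh where "hh w = \<phi> (\<pi> (lo R n w), (\<lambda>i. \<zero>)) \<oplus>\<^bsub>X\<^esub> G1 (hi n w)" for w
    have ggh: "gg \<in> mod_hom R X (free_mod R (n + n))"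
    proof (rule mod_homI)
      fix z assume "z \<in> carrier X"
      then have "fst z \<in> carrier M" "snd z \<in> K" by (auto simp: Xs)
      then show "gg z \<in> carrier (free_mod R (n + n))"
        unfolding gg_def using join_closed mod_homD(1)[OF sh] Kc by blast
    next
      fix z z' assume z: "z \<in> carrier X" and z': "z' \<in> carrier X"
      then have c: "fst z \<in> carrier M" "fst z' \<in> carrier M" by (auto simp: Xs)
      have "s (fst z \<oplus>\<^bsub>M\<^esub> fst z') = (\<lambda>i. s (fst z) i \<oplus> s (fst z') i)" using mod_homD(2)[OF sh c] by simp
      then show "gg (z \<oplus>\<^bsub>X\<^esub> z') = gg z \<oplus>\<^bsub>free_mod R (n + n)\<^esub> gg z'"
        by (auto simp: gg_def join_def Xs)
    next
      fix a z assume a: "a \<in> carrier R" and z: "z \<in> carrier X"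
      then have c: "fst z \<in> carrier M" by (auto simp: Xs)
      have "s (a \<odot>\<^bsub>M\<^esub> fst z) = (\<lambda>i. a \<otimes> s (fst z) i)" using mod_homD(3)[OF sh a c] by simp
      then show "gg (a \<odot>\<^bsub>X\<^esub> z) = a \<odot>\<^bsub>free_mod R (n + n)\<^esub> gg z"
        by (auto simp: gg_def join_def Xs)
    qed
    have zh: "(\<lambda>w. (\<lambda>i. \<zero>)) \<in> mod_hom R (free_mod R (n + n)) (submod (free_mod R n) K)"
      using Ksub by (intro mod_homI) (auto simp: subm_def)
    have h1: "(\<lambda>w. \<phi> (\<pi> (lo R n w), (\<lambda>i. \<zero>))) \<in> mod_hom R (free_mod R (n + n)) X"
    proof -
      have "(\<lambda>w. (\<pi> (lo R n w), (\<lambda>i. \<zero>))) \<in> mod_hom R (free_mod R (n + n)) X"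
        unfolding X_def by (rule hom_pair[OF mod_hom_comp[OF lo_hom \<pi>] zh])
      then show ?thesis by (rule mod_hom_comp[OF _ \<phi>])
    qed
    have h2: "(\<lambda>w. G1 (hi n w)) \<in> mod_hom R (free_mod R (n + n)) X"
      by (rule mod_hom_comp[OF hi_hom G1h])
    have hhh: "hh \<in> mod_hom R (free_mod R (n + n)) X"
      unfolding hh_def by (rule hom_addB[OF Xm h1 h2])
    have eq: "hh (gg z) = r \<odot>\<^bsub>X\<^esub> \<phi> z" if z: "z \<in> carrier X" for z
    proof -
      obtain x k where xk: "z = (x, k)" "x \<in> carrier M" "k \<in> K" using z by (cases z) (simp add: Xs)
      have sx: "s x \<in> carrier (free_mod R n)" using mod_homD(1)[OF sh xk(2)] .
      have c1: "(x, (\<lambda>i. \<zero>)) \<in> carrier X" "(\<zero>\<^bsub>M\<^esub>, k) \<in> carrier X"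
        using xk Ksub by (auto simp: Xs subm_def)
      have "z = (x, (\<lambda>i. \<zero>)) \<oplus>\<^bsub>X\<^esub> (\<zero>\<^bsub>M\<^esub>, k)" using xk Kc' by (auto simp: Xs)
      then have "\<phi> z = \<phi> (x, (\<lambda>i. \<zero>)) \<oplus>\<^bsub>X\<^esub> \<phi> (\<zero>\<^bsub>M\<^esub>, k)" using mod_homD(2)[OF \<phi> c1] by simp
      then have "r \<odot>\<^bsub>X\<^esub> \<phi> z = r \<odot>\<^bsub>X\<^esub> \<phi> (x, (\<lambda>i. \<zero>)) \<oplus>\<^bsub>X\<^esub> r \<odot>\<^bsub>X\<^esub> \<phi> (\<zero>\<^bsub>M\<^esub>, k)"
        using Xi.smult_r_distr[OF rc mod_homD(1)[OF \<phi> c1(1)] mod_homD(1)[OF \<phi> c1(2)]] by simp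
      also have "r \<odot>\<^bsub>X\<^esub> \<phi> (x, (\<lambda>i. \<zero>)) = \<phi> (r \<odot>\<^bsub>M\<^esub> x, (\<lambda>i. \<zero>))"
        using mod_homD(3)[OF \<phi> rc c1(1)] rc by (simp add: Xs)
      also have "r \<odot>\<^bsub>X\<^esub> \<phi> (\<zero>\<^bsub>M\<^esub>, k) = G1 k" using G1K[OF xk(3)] by simp
      also have "\<phi> (r \<odot>\<^bsub>M\<^esub> x, (\<lambda>i. \<zero>)) \<oplus>\<^bsub>X\<^esub> G1 k = hh (gg z)"
        using xk sx \<pi>s[OF xk(2)] by (simp add: hh_def gg_def lo_join hi_join)
      finally show ?thesis by simp
    qed
    show "\<exists>n g h. g \<in> mod_hom R X (free_mod R n) \<and> h \<in> mod_hom R (free_mod R n) X \<and>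
       (\<forall>x\<in>carrier X. h (g x) = r \<odot>\<^bsub>X\<^esub> \<phi> x)"
      using ggh hhh eq by blast
  qed
qed

end


theorem mainTheorem16:
  fixes R :: "'a ring" and M :: "('a, 'b) module" and n :: nat
    and \<pi> :: "(nat \<Rightarrow> 'a) \<Rightarrow> 'b"
  assumes "noetherian_ring R" and "local_ring R" and "module R M"
    and "\<pi> \<in> mod_hom R (free_mod R n) M"
    and "\<pi> ` carrier (free_mod R n) = carrier M"
  shows "stable_ann R (dsum M (submod (free_mod R n) (mod_kernel (free_mod R n) M \<pi>)))
       = AR_ann R (dsum M (submod (free_mod R n) (mod_kernel (free_mod R n) M \<pi>)))"
proof -
  have cR: "cring R" using assms(1) by (simp add: noetherian_ring_def)
  have noeth: "\<forall>I. ideal I R \<longrightarrow> (\<exists>A. finite A \<and> A \<subseteq> carrier R \<and> I = Idl\<^bsub>R\<^esub> A)"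
    using assms(1) by (simp add: noetherian_ring_def)
  interpret cr R unfolding cr_def by (rule cR)
  have Xm: "module R (dsum M (submod (free_mod R n) (mod_kernel (free_mod R n) M \<pi>)))"
    by (rule module_dsum[OF assms(3) module_submod[OF kernel_subm[OF assms(3) assms(4)]]])
  show ?thesis
  proof (rule equalityI)
    show "stable_ann R (dsum M (submod (free_mod R n) (mod_kernel (free_mod R n) M \<pi>)))
       \<subseteq> AR_ann R (dsum M (submod (free_mod R n) (mod_kernel (free_mod R n) M \<pi>)))"
      by (rule stable_sub_AR[OF Xm])
    show "AR_ann R (dsum M (submod (free_mod R n) (mod_kernel (free_mod R n) M \<pi>)))
       \<subseteq> stable_ann R (dsum M (submod (free_mod R n) (mod_kernel (free_mod R n) M \<pi>)))"
      by (rule AR_sub_stable[OF noeth assms(3) assms(4) assms(5) refl refl])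
  qed
qed

end
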